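(* There exists $n_0$ such that the following holds for every integer $n\ge n_0$. Let $Z$ be a finite set with $|Z|\ge n^{1/4}$ and let $T_1,T_2$ be rooted $Z$-trees with $\mathrm{Seq}(T_1)=\mathrm{Seq}(T_2)$ such that $|Q_j|\le |Z|/20$ and $|R_l|\le |Z|/20$ for all $1\le j\le k$, $1\le l\le m$ (with $Q_j,R_l$ as defined in the context). Then at least one of the following holds: (i) there exist disjoint sets $X,Y\subset Z$ with $|X|\ge n^{1/16}$, $|Y|\ge |Z|/(10\log n)$, such that $\mathrm{lca}_{T_1}(X)$ and $\mathrm{lca}_{T_1}(Y)$ are incomparable and $\mathrm{lca}_{T_2}(X)$ and $\mathrm{lca}_{T_2}(Y)$ are incomparable; (ii) there is a set $A\subseteq Z$ with $|A|\ge\frac{1}{48}\log n$ such that the unrooted trees obtained from $T_1|A$ and $T_2|A$ by suppressing the root are identical caterpillars.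
   Context: A rooted $Z$-tree is a binary rooted tree with a root of degree two, all other internal nodes of degree three, leaves bijectively labeled by $Z$, and each internal node having a designated left child and right child. $T_v$ is the subtree rooted at node $v$; the size of a tree is its number of leaves. Nodes $x,y$ are incomparable if neither is a descendant of the other; $\mathrm{lca}_T(W)$ is the lowest node having all elements of $W$ as descendants. For $A\subseteq Z$, $T|A$ is the rooted tree obtained from the minimal subtree spanning $A$, rooted at $\mathrm{lca}_T(A)$, by suppressing non-root degree-two nodes. $\mathrm{Seq}(T)$ is the left-to-right leaf ordering given by pre-order traversal (left child before right child). Let $P_1=(u_1,\dots,u_k)$ be the path in $T_1$ from its left-most leaf $u_1$ to its root $u_k$; $Q_1:=$ the one-leaf tree $u_1$ and for $2\le j\le k$, $Q_j:=(T_1)_c$ with $c$ the child of $u_j$ other than $u_{j-1}$. Let $P_2=(w_1,\dots,w_m)$ be the path in $T_2$ from its root $w_1$ to its right-most leaf $w_m$; $R_m:=$ the one-leaf tree $w_m$ and for $1\le l<m$, $R_l:=(T_2)_c$ with $c$ the child of $w_l$ other than $w_{l+1}$. A tree is a caterpillar if every internal node is adjacent to at least one leaf; unrooted trees are identical if there is a label-preserving graph isomorphism. $\log=\log_2$. *)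

theory Defs
  imports Complex_Main "HOL-Library.Sublist"
begin

datatype 'a tree = Lf 'a | Nd "'a tree" "'a tree"

text \<open>Seq(T): left-to-right leaf order (pre-order traversal).\<close>
fun leaves :: "'a tree \<Rightarrow> 'a list" where
  "leaves (Lf a) = [a]"
| "leaves (Nd l r) = leaves l @ leaves r"

definition ztree :: "'a set \<Rightarrow> 'a tree \<Rightarrow> bool" where
  "ztree Z t \<longleftrightarrow> distinct (leaves t) \<and> set (leaves t) = Z"

text \<open>Nodes are positions: paths from the root (False = left child, True = right child).\<close>
fun positions :: "'a tree \<Rightarrow> bool list set" where
  "positions (Lf a) = {[]}"
| "positions (Nd l r) = insert [] ((\<lambda>p. False # p) ` positions l \<union> (\<lambda>p. True # p) ` positions r)"

fun subtree :: "'a tree \<Rightarrow> bool list \<Rightarrow> 'a tree" where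
  "subtree t [] = t"
| "subtree (Nd l r) (False # p) = subtree l p"
| "subtree (Nd l r) (True # p) = subtree r p"
| "subtree (Lf a) (b # p) = Lf a"

text \<open>Node q is a descendant of node p iff p is a prefix of q.\<close>
definition incomparable :: "bool list \<Rightarrow> bool list \<Rightarrow> bool" where
  "incomparable p q \<longleftrightarrow> \<not> prefix p q \<and> \<not> prefix q p"

definition lca :: "'a tree \<Rightarrow> 'a set \<Rightarrow> bool list" where
  "lca t W = (THE p. p \<in> positions t \<and> W \<subseteq> set (leaves (subtree t p)) \<and>
      (\<forall>q \<in> positions t. W \<subseteq> set (leaves (subtree t q)) \<longrightarrow> prefix q p))"

text \<open>Q_1, ..., Q_k: the leftmost leaf, then the right subtrees hanging off the path
  from the leftmost leaf to the root (in that order).\<close>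
fun Qs :: "'a tree \<Rightarrow> 'a tree list" where
  "Qs (Lf a) = [Lf a]"
| "Qs (Nd l r) = Qs l @ [r]"

text \<open>R_1, ..., R_m: the left subtrees hanging off the path from the root to the
  rightmost leaf, then the rightmost leaf.\<close>
fun Rs :: "'a tree \<Rightarrow> 'a tree list" where
  "Rs (Lf a) = [Lf a]"
| "Rs (Nd l r) = l # Rs r"

text \<open>T|A: minimal subtree spanning A, rooted at its lca, with degree-two nodes suppressed
  (None if A contains no leaf of the tree).\<close>
fun restr :: "'a set \<Rightarrow> 'a tree \<Rightarrow> 'a tree option" where
  "restr A (Lf a) = (if a \<in> A then Some (Lf a) else None)"
| "restr A (Nd l r) = (case (restr A l, restr A r) of
      (Some l', Some r') \<Rightarrow> Some (Nd l' r')
    | (Some l', None) \<Rightarrow> Some l'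
    | (None, Some r') \<Rightarrow> Some r'
    | (None, None) \<Rightarrow> None)"

text \<open>The unrooted tree obtained by suppressing the root: vertices, edges, labels.\<close>
definition uverts :: "'a tree \<Rightarrow> bool list set" where
  "uverts t = (case t of Lf a \<Rightarrow> {[]} | Nd l r \<Rightarrow> positions t - {[]})"

definition uedges :: "'a tree \<Rightarrow> bool list set set" where
  "uedges t = {{p, p @ [b]} | p b. p \<noteq> [] \<and> p @ [b] \<in> positions t}
      \<union> (case t of Lf a \<Rightarrow> {} | Nd l r \<Rightarrow> {{[False], [True]}})"

definition ulabel :: "'a tree \<Rightarrow> bool list \<Rightarrow> 'a option" where
  "ulabel t p = (if p \<in> positions t then
      (case subtree t p of Lf a \<Rightarrow> Some a | Nd l r \<Rightarrow> None) else None)"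

definition identical_unrooted :: "'a tree \<Rightarrow> 'a tree \<Rightarrow> bool" where
  "identical_unrooted t1 t2 \<longleftrightarrow> (\<exists>f. bij_betw f (uverts t1) (uverts t2) \<and>
      (\<forall>p \<in> uverts t1. \<forall>q \<in> uverts t1. {p, q} \<in> uedges t1 \<longleftrightarrow> {f p, f q} \<in> uedges t2) \<and>
      (\<forall>p \<in> uverts t1. ulabel t2 (f p) = ulabel t1 p))"

definition caterpillar_unrooted :: "'a tree \<Rightarrow> bool" where
  "caterpillar_unrooted t \<longleftrightarrow> (\<forall>v \<in> uverts t. ulabel t v = None \<longrightarrow>
      (\<exists>u \<in> uverts t. {u, v} \<in> uedges t \<and> ulabel t u \<noteq> None))"

end

theory Submission
  imports Defs
begin

lemma leaves_ne: "leaves t \<noteq> []"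
  by (induction t) auto

lemma Qs_leaves: "concat (map leaves (Qs t)) = leaves t"
  by (induction t) auto

lemma Rs_leaves: "concat (map leaves (Rs t)) = leaves t"
  by (induction t) auto

lemma pos_append:
  "p \<in> positions t \<Longrightarrow> (p @ q \<in> positions t \<longleftrightarrow> q \<in> positions (subtree t p))"
proof (induction t arbitrary: p)
  case (Lf a) then show ?case by auto
next
  case (Nd l r) then show ?case
    by (cases p) (auto split: bool.splits)
qed

lemma subtree_append:
  "p \<in> positions t \<Longrightarrow> subtree t (p @ q) = subtree (subtree t p) q"
proof (induction t arbitrary: p)
  case (Lf a) then show ?case by auto
next
  case (Nd l r) then show ?case
    by (cases p) (auto split: bool.splits)
qed

lemma leaves_subtree: "p \<in> positions t \<Longrightarrow> set (leaves (subtree t p)) \<subseteq> set (leaves t)"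
proof (induction t arbitrary: p)
  case (Lf a) then show ?case by auto
next
  case (Nd l r) then show ?case
    by (cases p) (fastforce split: bool.splits)+
qed

lemma root_pos[simp]: "[] \<in> positions t"
  by (cases t) auto

fun lca' :: "'a tree \<Rightarrow> 'a set \<Rightarrow> bool list" where
  "lca' (Lf a) X = []"
| "lca' (Nd l r) X = (if X \<subseteq> set (leaves l) then False # lca' l X
     else if X \<subseteq> set (leaves r) then True # lca' r X else [])"

lemma lca'_prop:
  assumes "distinct (leaves t)" "X \<noteq> {}" "X \<subseteq> set (leaves t)"
  shows "lca' t X \<in> positions t \<and> X \<subseteq> set (leaves (subtree t (lca' t X))) \<and>
      (\<forall>q \<in> positions t. X \<subseteq> set (leaves (subtree t q)) \<longrightarrow> prefix q (lca' t X))"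
  using assms
proof (induction t)
  case (Lf a) then show ?case by auto
next
  case (Nd l r)
  have disj: "set (leaves l) \<inter> set (leaves r) = {}" using Nd.prems(1) by auto
  show ?case
  proof (cases "X \<subseteq> set (leaves l)")
    case True
    have IH: "lca' l X \<in> positions l \<and> X \<subseteq> set (leaves (subtree l (lca' l X))) \<and>
      (\<forall>q \<in> positions l. X \<subseteq> set (leaves (subtree l q)) \<longrightarrow> prefix q (lca' l X))"
      using Nd True by auto
    have "\<forall>q \<in> positions (Nd l r). X \<subseteq> set (leaves (subtree (Nd l r) q)) \<longrightarrow> prefix q (False # lca' l X)"
    proof (intro ballI impI)
      fix q assume q: "q \<in> positions (Nd l r)" "X \<subseteq> set (leaves (subtree (Nd l r) q))"
      show "prefix q (False # lca' l X)"
      proof (cases q)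
        case Nil then show ?thesis by simp
      next
        case (Cons b q')
        show ?thesis
        proof (cases b)
          case False then show ?thesis using IH q Cons by auto
        next
          case True
          then have "q' \<in> positions r" "X \<subseteq> set (leaves (subtree r q'))" using q Cons by auto
          then have "X \<subseteq> set (leaves r)" using leaves_subtree by blast
          then show ?thesis using \<open>X \<subseteq> set (leaves l)\<close> disj Nd.prems(2) by blast
        qed
      qed
    qed
    then show ?thesis using True IH by auto
  next
    case nl: False
    show ?thesis
    proof (cases "X \<subseteq> set (leaves r)")
      case True
      have IH: "lca' r X \<in> positions r \<and> X \<subseteq> set (leaves (subtree r (lca' r X))) \<and>
        (\<forall>q \<in> positions r. X \<subseteq> set (leaves (subtree r q)) \<longrightarrow> prefix q (lca' r X))"
        using Nd True by auto
      have "\<forall>q \<in> positions (Nd l r). X \<subseteq> set (leaves (subtree (Nd l r) q)) \<longrightarrow> prefix q (True # lca' r X)"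
      proof (intro ballI impI)
        fix q assume q: "q \<in> positions (Nd l r)" "X \<subseteq> set (leaves (subtree (Nd l r) q))"
        show "prefix q (True # lca' r X)"
        proof (cases q)
          case Nil then show ?thesis by simp
        next
          case (Cons b q')
          show ?thesis
          proof (cases b)
            case True then show ?thesis using IH q Cons by auto
          next
            case False
            then have "q' \<in> positions l" "X \<subseteq> set (leaves (subtree l q'))" using q Cons by auto
            then have "X \<subseteq> set (leaves l)" using leaves_subtree by blast
            then show ?thesis using nl by blast
          qed
        qed
      qed
      then show ?thesis using True nl IH by auto
    next
      case False
      have "\<forall>q \<in> positions (Nd l r). X \<subseteq> set (leaves (subtree (Nd l r) q)) \<longrightarrow> prefix q []"
      proof (intro ballI impI)
        fix q assume q: "q \<in> positions (Nd l r)" "X \<subseteq> set (leaves (subtree (Nd l r) q))"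
        show "prefix q []"
        proof (cases q)
          case Nil then show ?thesis by simp
        next
          case (Cons b q')
          show ?thesis
          proof (cases b)
            case True
            then have "q' \<in> positions r" "X \<subseteq> set (leaves (subtree r q'))" using q Cons by auto
            then have "X \<subseteq> set (leaves r)" using leaves_subtree by blast
            then show ?thesis using False by blast
          next
            case f: False
            then have "q' \<in> positions l" "X \<subseteq> set (leaves (subtree l q'))" using q Cons by auto
            then have "X \<subseteq> set (leaves l)" using leaves_subtree by blast
            then show ?thesis using nl by blast
          qed
        qed
      qed
      then show ?thesis using False nl Nd.prems by auto
    qed
  qed
qed

lemma lca_eq:
  assumes "distinct (leaves t)" "X \<noteq> {}" "X \<subseteq> set (leaves t)"
  shows "lca t X = lca' t X"
  unfolding lca_def
proof (rule the_equality)
  show "lca' t X \<in> positions t \<and> X \<subseteq> set (leaves (subtree t (lca' t X))) \<and>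
      (\<forall>q \<in> positions t. X \<subseteq> set (leaves (subtree t q)) \<longrightarrow> prefix q (lca' t X))"
    using lca'_prop[OF assms] .
next
  fix p assume p: "p \<in> positions t \<and> X \<subseteq> set (leaves (subtree t p)) \<and>
      (\<forall>q \<in> positions t. X \<subseteq> set (leaves (subtree t q)) \<longrightarrow> prefix q p)"
  have h: "lca' t X \<in> positions t \<and> X \<subseteq> set (leaves (subtree t (lca' t X))) \<and>
      (\<forall>q \<in> positions t. X \<subseteq> set (leaves (subtree t q)) \<longrightarrow> prefix q (lca' t X))"
    using lca'_prop[OF assms] .
  have "prefix p (lca' t X)" using h p by blast
  moreover have "prefix (lca' t X) p" using h p by blast
  ultimately show "p = lca' t X" by (rule prefix_order.antisym)
qed

lemma Qs_sub: "Q \<in> set (Qs t) \<Longrightarrow> set (leaves Q) \<subseteq> set (leaves t)"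
  using Qs_leaves[of t] by (metis UN_upper set_concat set_map image_eqI)

lemma Rs_sub: "R \<in> set (Rs t) \<Longrightarrow> set (leaves R) \<subseteq> set (leaves t)"
  using Rs_leaves[of t] by (metis UN_upper set_concat set_map image_eqI)

lemma UN_nth_gen: "(\<Union>b<length xs. F (xs ! b)) = (\<Union>x\<in>set xs. F x)"
proof
  show "(\<Union>b<length xs. F (xs ! b)) \<subseteq> (\<Union>x\<in>set xs. F x)" using nth_mem by blast
  show "(\<Union>x\<in>set xs. F x) \<subseteq> (\<Union>b<length xs. F (xs ! b))" by (auto simp: in_set_conv_nth)
qed

lemma UN_nth: "(\<Union>b<length xs. set (leaves (xs ! b))) = set (concat (map leaves xs))"
  using UN_nth_gen[of "\<lambda>x. set (leaves x)" xs] by simp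

lemma lca'_left: "distinct (leaves (Nd l r)) \<Longrightarrow> X \<noteq> {} \<Longrightarrow> X \<subseteq> set (leaves l) \<Longrightarrow>
   lca' (Nd l r) X = False # lca' l X"
  by simp

lemma lca'_right: "distinct (leaves (Nd l r)) \<Longrightarrow> X \<noteq> {} \<Longrightarrow> X \<subseteq> set (leaves r) \<Longrightarrow>
   lca' (Nd l r) X = True # lca' r X"
  by auto

lemma incomp_cons[simp]: "incomparable (b # p) (b # q) = incomparable p q"
  by (auto simp: incomparable_def)

lemma incomp_FT: "incomparable (False # p) (True # q)" "incomparable (True # p) (False # q)"
  by (auto simp: incomparable_def)

lemma incomparable_sym: "incomparable p q \<Longrightarrow> incomparable q p"
  by (auto simp: incomparable_def)

lemma Qs_incomp:
  assumes "distinct (leaves t)" "a < length (Qs t)" "X \<noteq> {}" "X \<subseteq> set (leaves (Qs t ! a))"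
    "Y \<noteq> {}" "Y \<subseteq> (\<Union>b<a. set (leaves (Qs t ! b)))"
  shows "incomparable (lca' t X) (lca' t Y)"
  using assms
proof (induction t arbitrary: a)
  case (Lf x) then show ?case by auto
next
  case (Nd l r)
  have dl: "distinct (leaves l)" using Nd.prems(1) by simp
  show ?case
  proof (cases "a < length (Qs l)")
    case True
    have X: "X \<subseteq> set (leaves (Qs l ! a))" using Nd.prems True by (simp add: nth_append)
    have Y: "Y \<subseteq> (\<Union>b<a. set (leaves (Qs l ! b)))" using Nd.prems True by (simp add: nth_append)
    have "X \<subseteq> set (leaves l)" using X Qs_sub True nth_mem by blast
    moreover have "Y \<subseteq> set (leaves l)"
    proof -
      have "\<forall>b<a. set (leaves (Qs l ! b)) \<subseteq> set (leaves l)" using True by (meson Qs_sub nth_mem order.strict_trans)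
      then show ?thesis using Y by blast
    qed
    moreover have "incomparable (lca' l X) (lca' l Y)" using Nd.IH(1)[OF dl True Nd.prems(3) X Nd.prems(5) Y] .
    ultimately show ?thesis using Nd.prems by simp
  next
    case False
    then have a: "a = length (Qs l)" using Nd.prems(2) by simp
    have X: "X \<subseteq> set (leaves r)" using Nd.prems a by simp
    have "Y \<subseteq> (\<Union>b<length (Qs l). set (leaves (Qs l ! b)))" using Nd.prems a by (simp add: nth_append)
    then have Y: "Y \<subseteq> set (leaves l)" using UN_nth[of "Qs l"] Qs_leaves[of l] by simp
    have dj: "set (leaves l) \<inter> set (leaves r) = {}" using Nd.prems(1) by simp
    have "\<not> X \<subseteq> set (leaves l)" using X dj Nd.prems(3) by blast
    then have "lca' (Nd l r) X = True # lca' r X" using X by simp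
    moreover have "lca' (Nd l r) Y = False # lca' l Y" using Y by simp
    ultimately show ?thesis by (simp add: incomp_FT)
  qed
qed

lemma Rs_incomp:
  assumes "distinct (leaves t)" "c < length (Rs t)" "X \<noteq> {}" "X \<subseteq> set (leaves (Rs t ! c))"
    "Y \<noteq> {}" "Y \<subseteq> (\<Union>d\<in>{c<..<length (Rs t)}. set (leaves (Rs t ! d)))"
  shows "incomparable (lca' t X) (lca' t Y)"
  using assms
proof (induction t arbitrary: c)
  case (Lf x)
  then have "{c<..<length (Rs (Lf x))} = {}" by auto
  then show ?case using Lf by auto
next
  case (Nd l r)
  have dr: "distinct (leaves r)" using Nd.prems(1) by simp
  have dj: "set (leaves l) \<inter> set (leaves r) = {}" using Nd.prems(1) by simp
  show ?case
  proof (cases c)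
    case 0
    have X: "X \<subseteq> set (leaves l)" using Nd.prems 0 by simp
    have "Y \<subseteq> (\<Union>d\<in>{0<..<Suc (length (Rs r))}. set (leaves ((l # Rs r) ! d)))" using Nd.prems 0 by simp
    also have "\<dots> = (\<Union>d<length (Rs r). set (leaves (Rs r ! d)))"
      by (auto simp: nth_Cons split: nat.splits)
    finally have Y: "Y \<subseteq> set (leaves r)" using UN_nth[of "Rs r"] Rs_leaves[of r] by simp
    have "\<not> Y \<subseteq> set (leaves l)" using Y dj Nd.prems(5) by blast
    then have "lca' (Nd l r) Y = True # lca' r Y" using Y by simp
    moreover have "lca' (Nd l r) X = False # lca' l X" using X by simp
    ultimately show ?thesis by (simp add: incomp_FT)
  next
    case (Suc c')
    have c': "c' < length (Rs r)" using Nd.prems Suc by simp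
    have X: "X \<subseteq> set (leaves (Rs r ! c'))" using Nd.prems Suc by simp
    have "Y \<subseteq> (\<Union>d\<in>{Suc c'<..<Suc (length (Rs r))}. set (leaves ((l # Rs r) ! d)))" using Nd.prems Suc by simp
    also have "\<dots> = (\<Union>d\<in>{c'<..<length (Rs r)}. set (leaves (Rs r ! d)))"
      apply (auto simp: nth_Cons split: nat.splits)
      apply (metis Suc_less_eq greaterThanLessThan_iff)
      apply (metis Suc_less_eq greaterThanLessThan_iff nth_Cons_Suc)
      done
    finally have Y: "Y \<subseteq> (\<Union>d\<in>{c'<..<length (Rs r)}. set (leaves (Rs r ! d)))" .
    have Xr: "X \<subseteq> set (leaves r)" using X Rs_sub c' nth_mem by blast
    have Yr: "Y \<subseteq> set (leaves r)"
    proof -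
      have "\<forall>d\<in>{c'<..<length (Rs r)}. set (leaves (Rs r ! d)) \<subseteq> set (leaves r)" by (meson Rs_sub nth_mem greaterThanLessThan_iff)
      then show ?thesis using Y by blast
    qed
    have "\<not> X \<subseteq> set (leaves l)" using Xr dj Nd.prems(3) by blast
    moreover have "\<not> Y \<subseteq> set (leaves l)" using Yr dj Nd.prems(5) by blast
    moreover have "incomparable (lca' r X) (lca' r Y)" using Nd.IH(2)[OF dr c' Nd.prems(3) X Nd.prems(5) Y] .
    ultimately show ?thesis using Xr Yr by simp
  qed
qed

lemma restr_None: "restr A t = None \<longleftrightarrow> (\<forall>x\<in>set (leaves t). x \<notin> A)"
  by (induction t) (auto split: option.splits)


lemma restr_leaves: "restr A t = Some s \<Longrightarrow> leaves s = filter (\<lambda>x. x \<in> A) (leaves t)"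
  by (induction t arbitrary: s) (auto split: option.splits if_splits simp: restr_None filter_empty_conv)

lemma restr_inter: "restr A t = restr (A \<inter> set (leaves t)) t"
proof (induction t arbitrary: A)
  case (Lf a) then show ?case by auto
next
  case (Nd l r)
  have l: "restr (A \<inter> set (leaves (Nd l r))) l = restr A l"
  proof -
    have "restr (A \<inter> set (leaves (Nd l r))) l = restr ((A \<inter> set (leaves (Nd l r))) \<inter> set (leaves l)) l"
      using Nd.IH(1) by blast
    also have "(A \<inter> set (leaves (Nd l r))) \<inter> set (leaves l) = A \<inter> set (leaves l)" by auto
    also have "restr (A \<inter> set (leaves l)) l = restr A l" using Nd.IH(1) by metis
    finally show ?thesis .
  qed
  have r: "restr (A \<inter> set (leaves (Nd l r))) r = restr A r"
  proof -
    have "restr (A \<inter> set (leaves (Nd l r))) r = restr ((A \<inter> set (leaves (Nd l r))) \<inter> set (leaves r)) r"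
      using Nd.IH(2) by blast
    also have "(A \<inter> set (leaves (Nd l r))) \<inter> set (leaves r) = A \<inter> set (leaves r)" by auto
    also have "restr (A \<inter> set (leaves r)) r = restr A r" using Nd.IH(2) by metis
    finally show ?thesis .
  qed
  show ?case using l r by simp
qed

lemma restr_cong: "A \<inter> set (leaves t) = B \<inter> set (leaves t) \<Longrightarrow> restr A t = restr B t"
  by (metis restr_inter)

fun lcs :: "'a tree \<Rightarrow> bool" where
  "lcs (Lf a) = True"
| "lcs (Nd l r) = ((\<exists>a. r = Lf a) \<and> lcs l)"

fun rcs :: "'a tree \<Rightarrow> bool" where
  "rcs (Lf a) = True"
| "rcs (Nd l r) = ((\<exists>a. l = Lf a) \<and> rcs r)"

lemma length_leaves_Nd: "2 \<le> length (leaves (Nd l r))"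
  using leaves_ne[of l] leaves_ne[of r] by (cases "leaves l"; cases "leaves r") auto

lemma restr_small: "length (filter (\<lambda>x. x \<in> A) (leaves t)) \<le> 1 \<Longrightarrow> restr A t = Some s \<Longrightarrow> \<exists>a. s = Lf a"
proof (cases s)
  case (Nd l r)
  assume a1: "length (filter (\<lambda>x. x \<in> A) (leaves t)) \<le> 1" and a2: "restr A t = Some s"
  have "2 \<le> length (leaves s)" using length_leaves_Nd Nd by simp
  then show ?thesis using restr_leaves[OF a2] a1 by simp
qed auto

lemma restr_Qs_lc:
  "(\<forall>Q\<in>set (Qs t). length (filter (\<lambda>x. x \<in> A) (leaves Q)) \<le> 1) \<Longrightarrow> restr A t = Some s \<Longrightarrow> lcs s"
proof (induction t arbitrary: s)
  case (Lf a) then show ?case by (auto split: if_splits)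
next
  case (Nd l r)
  have r: "length (filter (\<lambda>x. x \<in> A) (leaves r)) \<le> 1" using Nd.prems(1) by simp
  have IHl: "\<And>s. restr A l = Some s \<Longrightarrow> lcs s" using Nd.IH(1) Nd.prems(1) by simp
  show ?case
  proof (cases "restr A r")
    case None then show ?thesis using Nd.prems(2) IHl by (auto split: option.splits)
  next
    case (Some s')
    then obtain a where "s' = Lf a" using restr_small[OF r] by blast
    then show ?thesis using Nd.prems(2) IHl Some by (auto split: option.splits)
  qed
qed

lemma restr_Rs_rc:
  "(\<forall>R\<in>set (Rs t). length (filter (\<lambda>x. x \<in> A) (leaves R)) \<le> 1) \<Longrightarrow> restr A t = Some s \<Longrightarrow> rcs s"
proof (induction t arbitrary: s)
  case (Lf a) then show ?case by (auto split: if_splits)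
next
  case (Nd l r)
  have l: "length (filter (\<lambda>x. x \<in> A) (leaves l)) \<le> 1" using Nd.prems(1) by simp
  have IHr: "\<And>s. restr A r = Some s \<Longrightarrow> rcs s" using Nd.IH(2) Nd.prems(1) by simp
  show ?case
  proof (cases "restr A l")
    case None then show ?thesis using Nd.prems(2) IHr by (auto split: option.splits)
  next
    case (Some s')
    then obtain a where "s' = Lf a" using restr_small[OF l] by blast
    then show ?thesis using Nd.prems(2) IHr Some by (auto split: option.splits)
  qed
qed

lemma restr_sub_left: "A \<inter> set (leaves r) = {} \<Longrightarrow> restr A (Nd l r) = restr A l"
proof -
  assume "A \<inter> set (leaves r) = {}"
  then have "restr A r = None" using restr_None by blast
  then show ?thesis by (auto split: option.splits)
qed

lemma restr_sub_right: "A \<inter> set (leaves l) = {} \<Longrightarrow> restr A (Nd l r) = restr A r"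
proof -
  assume "A \<inter> set (leaves l) = {}"
  then have "restr A l = None" using restr_None by blast
  then show ?thesis by (auto split: option.splits)
qed

lemma restr_block_Q:
  "Q \<in> set (Qs t) \<Longrightarrow> distinct (leaves t) \<Longrightarrow> A \<subseteq> set (leaves Q) \<Longrightarrow> restr A t = restr A Q"
proof (induction t)
  case (Lf a) then show ?case by auto
next
  case (Nd l r)
  have dj: "set (leaves l) \<inter> set (leaves r) = {}" using Nd.prems(2) by simp
  show ?case
  proof (cases "Q = r")
    case True
    then have "A \<inter> set (leaves l) = {}" using Nd.prems dj by blast
    then show ?thesis using True restr_sub_right by metis
  next
    case False
    then have Q: "Q \<in> set (Qs l)" using Nd.prems(1) by simp
    then have "A \<subseteq> set (leaves l)" using Nd.prems(3) Qs_sub by blast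
    then have "A \<inter> set (leaves r) = {}" using dj by blast
    then show ?thesis using restr_sub_left Nd.IH(1) Q Nd.prems by (metis distinct_append leaves.simps(2))
  qed
qed

lemma restr_block_R:
  "R \<in> set (Rs t) \<Longrightarrow> distinct (leaves t) \<Longrightarrow> A \<subseteq> set (leaves R) \<Longrightarrow> restr A t = restr A R"
proof (induction t)
  case (Lf a) then show ?case by auto
next
  case (Nd l r)
  have dj: "set (leaves l) \<inter> set (leaves r) = {}" using Nd.prems(2) by simp
  show ?case
  proof (cases "R = l")
    case True
    then have "A \<inter> set (leaves r) = {}" using Nd.prems dj by blast
    then show ?thesis using True restr_sub_left by metis
  next
    case False
    then have R: "R \<in> set (Rs r)" using Nd.prems(1) by simp
    then have "A \<subseteq> set (leaves r)" using Nd.prems(3) Rs_sub by blast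
    then have "A \<inter> set (leaves l) = {}" using dj by blast
    then show ?thesis using restr_sub_right Nd.IH(2) R Nd.prems by (metis distinct_append leaves.simps(2))
  qed
qed

lemma restr_single: "distinct (leaves t) \<Longrightarrow> x \<in> set (leaves t) \<Longrightarrow> restr {x} t = Some (Lf x)"
proof (induction t)
  case (Lf a) then show ?case by auto
next
  case (Nd l r)
  show ?case
  proof (cases "x \<in> set (leaves l)")
    case True
    then have "{x} \<inter> set (leaves r) = {}" using Nd.prems(1) by auto
    then have eq: "restr {x} (Nd l r) = restr {x} l" by (rule restr_sub_left)
    have "restr {x} l = Some (Lf x)" using Nd.IH(1) Nd.prems True by simp
    then show ?thesis using eq by metis
  next
    case False
    then have "{x} \<inter> set (leaves l) = {}" by auto
    then have eq: "restr {x} (Nd l r) = restr {x} r" by (rule restr_sub_right)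
    have "restr {x} r = Some (Lf x)" using Nd.IH(2) Nd.prems False by simp
    then show ?thesis using eq by metis
  qed
qed

lemma log_half: "0 < c \<Longrightarrow> u \<le> 2 * c \<Longrightarrow> 0 < u \<Longrightarrow> log 2 (real u) \<le> 1 + log 2 (real c)"
proof -
  assume a: "0 < c" "u \<le> 2 * c" "0 < u"
  have "log 2 (real u) \<le> log 2 (2 * real c)" using a by (subst log_le_cancel_iff) auto
  also have "\<dots> = 1 + log 2 (real c)" using a by (simp add: log_mult)
  finally show ?thesis .
qed

lemma comb_exists:
  assumes "distinct (leaves t)" "U \<inter> set (leaves t) \<noteq> {}"
  shows "\<exists>A B sa sb. A \<subseteq> U \<inter> set (leaves t) \<and> B \<subseteq> U \<inter> set (leaves t) \<and>
     restr A t = Some sa \<and> lcs sa \<and> restr B t = Some sb \<and> rcs sb \<and>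
     log 2 (real (card (U \<inter> set (leaves t)))) + 2 \<le> real (card A) + real (card B)"
  using assms
proof (induction t)
  case (Lf a)
  then have "U \<inter> set (leaves (Lf a)) = {a}" by auto
  then show ?case by (rule_tac x="{a}" in exI, rule_tac x="{a}" in exI) auto
next
  case (Nd l r)
  define Ul where "Ul = U \<inter> set (leaves l)"
  define Ur where "Ur = U \<inter> set (leaves r)"
  have dl: "distinct (leaves l)" and dr: "distinct (leaves r)" and dj: "set (leaves l) \<inter> set (leaves r) = {}"
    using Nd.prems(1) by auto
  have U: "U \<inter> set (leaves (Nd l r)) = Ul \<union> Ur" unfolding Ul_def Ur_def by auto
  have fin: "finite Ul" "finite Ur" unfolding Ul_def Ur_def by auto
  have djU: "Ul \<inter> Ur = {}" unfolding Ul_def Ur_def using dj by auto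
  have cardU: "card (Ul \<union> Ur) = card Ul + card Ur" using card_Un_disjoint[OF fin djU] .
  show ?case
  proof (cases "Ul = {}")
    case True
    then have ne: "U \<inter> set (leaves r) \<noteq> {}" using Nd.prems(2) U Ur_def by auto
    obtain A B sa sb where h: "A \<subseteq> Ur" "B \<subseteq> Ur" "restr A r = Some sa" "lcs sa" "restr B r = Some sb" "rcs sb"
      "log 2 (real (card Ur)) + 2 \<le> real (card A) + real (card B)"
      using Nd.IH(2)[OF dr ne] unfolding Ur_def by blast
    have "A \<inter> set (leaves l) = {}" "B \<inter> set (leaves l) = {}" using h(1,2) dj unfolding Ur_def by auto
    then have "restr A (Nd l r) = Some sa" "restr B (Nd l r) = Some sb" using h restr_sub_right by metis+
    then show ?thesis using h U True by (rule_tac x=A in exI, rule_tac x=B in exI) auto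
  next
    case ulne: False
    show ?thesis
    proof (cases "Ur = {}")
      case True
      then have ne: "U \<inter> set (leaves l) \<noteq> {}" using ulne Ul_def by auto
      obtain A B sa sb where h: "A \<subseteq> Ul" "B \<subseteq> Ul" "restr A l = Some sa" "lcs sa" "restr B l = Some sb" "rcs sb"
        "log 2 (real (card Ul)) + 2 \<le> real (card A) + real (card B)"
        using Nd.IH(1)[OF dl ne] unfolding Ul_def by blast
      have "A \<inter> set (leaves r) = {}" "B \<inter> set (leaves r) = {}" using h(1,2) dj unfolding Ul_def by auto
      then have "restr A (Nd l r) = Some sa" "restr B (Nd l r) = Some sb" using h restr_sub_left by metis+
      then show ?thesis using h U True by (rule_tac x=A in exI, rule_tac x=B in exI) auto
    next
      case urne: False
      have cl: "0 < card Ul" "0 < card Ur" using fin ulne urne by (auto simp: card_gt_0_iff)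
      show ?thesis
      proof (cases "card Ur \<le> card Ul")
        case True
        have ne: "U \<inter> set (leaves l) \<noteq> {}" using ulne Ul_def by auto
        obtain A B sa sb where h: "A \<subseteq> Ul" "B \<subseteq> Ul" "restr A l = Some sa" "lcs sa" "restr B l = Some sb" "rcs sb"
          "log 2 (real (card Ul)) + 2 \<le> real (card A) + real (card B)"
          using Nd.IH(1)[OF dl ne] unfolding Ul_def by blast
        obtain x where x: "x \<in> Ur" using urne by blast
        have xl: "x \<notin> set (leaves l)" "x \<in> set (leaves r)" using x dj unfolding Ur_def by auto
        have "(insert x A) \<inter> set (leaves l) = A \<inter> set (leaves l)" using xl by auto
        then have e1: "restr (insert x A) l = Some sa" using restr_cong h(3) by metis
        have "(insert x A) \<inter> set (leaves r) = {x} \<inter> set (leaves r)" using h(1) dj xl unfolding Ul_def by auto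
        then have e2: "restr (insert x A) r = Some (Lf x)" using restr_cong restr_single[OF dr xl(2)] by metis
        have e3: "restr (insert x A) (Nd l r) = Some (Nd sa (Lf x))" using e1 e2 by simp
        have "B \<inter> set (leaves r) = {}" using h(2) dj unfolding Ul_def by auto
        then have e4: "restr B (Nd l r) = Some sb" using h restr_sub_left by metis
        have finA: "finite A" using h(1) fin(1) finite_subset by blast
        have xA: "x \<notin> A" using h(1) xl unfolding Ul_def by auto
        have cA: "card (insert x A) = card A + 1" using finA xA by simp
        have "log 2 (real (card (Ul \<union> Ur))) \<le> 1 + log 2 (real (card Ul))"
          using log_half[OF cl(1), of "card Ul + card Ur"] cardU True cl by (simp del: of_nat_add)
        then show ?thesis using h e3 e4 U cA x h(1)
          by (rule_tac x="insert x A" in exI, rule_tac x=B in exI) auto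
      next
        case False
        have ne: "U \<inter> set (leaves r) \<noteq> {}" using urne Ur_def by auto
        obtain A B sa sb where h: "A \<subseteq> Ur" "B \<subseteq> Ur" "restr A r = Some sa" "lcs sa" "restr B r = Some sb" "rcs sb"
          "log 2 (real (card Ur)) + 2 \<le> real (card A) + real (card B)"
          using Nd.IH(2)[OF dr ne] unfolding Ur_def by blast
        obtain x where x: "x \<in> Ul" using ulne by blast
        have xl: "x \<notin> set (leaves r)" "x \<in> set (leaves l)" using x dj unfolding Ul_def by auto
        have "(insert x B) \<inter> set (leaves r) = B \<inter> set (leaves r)" using xl by auto
        then have e1: "restr (insert x B) r = Some sb" using restr_cong h(5) by metis
        have "(insert x B) \<inter> set (leaves l) = {x} \<inter> set (leaves l)" using h(2) dj xl unfolding Ur_def by auto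
        then have e2: "restr (insert x B) l = Some (Lf x)" using restr_cong restr_single[OF dl xl(2)] by metis
        have e3: "restr (insert x B) (Nd l r) = Some (Nd (Lf x) sb)" using e1 e2 by simp
        have "A \<inter> set (leaves l) = {}" using h(1) dj unfolding Ur_def by auto
        then have e4: "restr A (Nd l r) = Some sa" using h restr_sub_right by metis
        have finB: "finite B" using h(2) fin(2) finite_subset by blast
        have xB: "x \<notin> B" using h(2) xl unfolding Ur_def by auto
        have cB: "card (insert x B) = card B + 1" using finB xB by simp
        have "log 2 (real (card (Ul \<union> Ur))) \<le> 1 + log 2 (real (card Ur))"
          using log_half[OF cl(2), of "card Ul + card Ur"] cardU False cl by (simp del: of_nat_add)
        then show ?thesis using h e3 e4 U cB x h(2)
          by (rule_tac x=A in exI, rule_tac x="insert x B" in exI) auto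
      qed
    qed
  qed
qed

lemma pos_Cons[simp]: "(b # q \<in> positions (Nd l r)) = (if b then q \<in> positions r else q \<in> positions l)"
  by auto

lemma pos_Cons_Lf[simp]: "(b # q \<notin> positions (Lf a))"
  by auto

lemma uedge_iff: "{p, q} \<in> uedges (Nd l r) \<longleftrightarrow>
   ((p \<noteq> [] \<and> (\<exists>b. q = p @ [b]) \<and> q \<in> positions (Nd l r)) \<or>
    (q \<noteq> [] \<and> (\<exists>b. p = q @ [b]) \<and> p \<in> positions (Nd l r)) \<or>
    (p = [False] \<and> q = [True]) \<or> (p = [True] \<and> q = [False]))"
  unfolding uedges_def by (auto simp: doubleton_eq_iff)

fun rf :: "bool list \<Rightarrow> bool list" where
  "rf (False # False # q) = False # q"
| "rf (False # True # q) = True # False # q"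
| "rf [False] = [True]"
| "rf (True # q) = True # True # q"
| "rf [] = []"

fun rg :: "bool list \<Rightarrow> bool list" where
  "rg (False # q) = False # False # q"
| "rg [True] = [False]"
| "rg (True # False # q) = False # True # q"
| "rg (True # True # q) = True # q"
| "rg [] = []"

lemma rgf: "rg (rf p) = p"
  by (induction p rule: rf.induct) auto

lemma rfg: "rf (rg p) = p"
  by (induction p rule: rg.induct) auto

lemma rot_verts:
  "p \<in> uverts (Nd (Nd L M) R) \<longleftrightarrow> rf p \<in> uverts (Nd L (Nd M R))"
  unfolding uverts_def by (induction p rule: rf.induct) auto

lemma rot_edges1:
  assumes "p \<in> uverts (Nd (Nd L M) R)" "q \<in> uverts (Nd (Nd L M) R)" "{p, q} \<in> uedges (Nd (Nd L M) R)"
  shows "{rf p, rf q} \<in> uedges (Nd L (Nd M R))"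
  using assms unfolding uverts_def uedge_iff
  apply (elim disjE conjE exE)
  subgoal for b
    by (induction p rule: rf.induct; cases b) auto
  subgoal for b
    by (induction q rule: rf.induct; cases b) auto
  by auto

lemma rot_edges2:
  assumes "p \<in> uverts (Nd L (Nd M R))" "q \<in> uverts (Nd L (Nd M R))" "{p, q} \<in> uedges (Nd L (Nd M R))"
  shows "{rg p, rg q} \<in> uedges (Nd (Nd L M) R)"
  using assms unfolding uverts_def uedge_iff
  apply (elim disjE conjE exE)
  subgoal for b
    by (induction p rule: rg.induct; cases b) auto
  subgoal for b
    by (induction q rule: rg.induct; cases b) auto
  by auto

lemma rot_label: "p \<in> uverts (Nd (Nd L M) R) \<Longrightarrow> ulabel (Nd L (Nd M R)) (rf p) = ulabel (Nd (Nd L M) R) p"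
  unfolding uverts_def ulabel_def by (induction p rule: rf.induct) auto

lemma rot_ident: "identical_unrooted (Nd (Nd L M) R) (Nd L (Nd M R))"
  unfolding identical_unrooted_def
proof (intro exI conjI)
  let ?U1 = "uverts (Nd (Nd L M) R)" and ?U2 = "uverts (Nd L (Nd M R))"
  show "bij_betw rf ?U1 ?U2"
  proof (rule bij_betw_byWitness[where f'=rg])
    show "\<forall>a\<in>?U1. rg (rf a) = a" by (simp add: rgf)
    show "\<forall>a\<in>?U2. rf (rg a) = a" by (simp add: rfg)
    show "rf ` ?U1 \<subseteq> ?U2" using rot_verts by blast
    show "rg ` ?U2 \<subseteq> ?U1" using rot_verts rfg by (metis image_subsetI)
  qed
  show "\<forall>p\<in>?U1. \<forall>q\<in>?U1. ({p, q} \<in> uedges (Nd (Nd L M) R)) = ({rf p, rf q} \<in> uedges (Nd L (Nd M R)))"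
  proof (intro ballI iffI)
    fix p q assume "p \<in> ?U1" "q \<in> ?U1" "{p, q} \<in> uedges (Nd (Nd L M) R)"
    then show "{rf p, rf q} \<in> uedges (Nd L (Nd M R))" by (rule rot_edges1)
  next
    fix p q assume a: "p \<in> ?U1" "q \<in> ?U1" "{rf p, rf q} \<in> uedges (Nd L (Nd M R))"
    have "rf p \<in> ?U2" "rf q \<in> ?U2" using a rot_verts by blast+
    then have "{rg (rf p), rg (rf q)} \<in> uedges (Nd (Nd L M) R)" using rot_edges2 a(3) by blast
    then show "{p, q} \<in> uedges (Nd (Nd L M) R)" by (simp add: rgf)
  qed
  show "\<forall>p\<in>?U1. ulabel (Nd L (Nd M R)) (rf p) = ulabel (Nd (Nd L M) R) p"
    using rot_label by blast
qed

lemma ident_refl: "identical_unrooted t t"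
  unfolding identical_unrooted_def by (rule exI[of _ id]) auto

lemma ident_trans:
  assumes "identical_unrooted t1 t2" "identical_unrooted t2 t3"
  shows "identical_unrooted t1 t3"
proof -
  obtain f where f: "bij_betw f (uverts t1) (uverts t2)"
      "\<forall>p \<in> uverts t1. \<forall>q \<in> uverts t1. {p, q} \<in> uedges t1 \<longleftrightarrow> {f p, f q} \<in> uedges t2"
      "\<forall>p \<in> uverts t1. ulabel t2 (f p) = ulabel t1 p"
    using assms(1) unfolding identical_unrooted_def by blast
  obtain g where g: "bij_betw g (uverts t2) (uverts t3)"
      "\<forall>p \<in> uverts t2. \<forall>q \<in> uverts t2. {p, q} \<in> uedges t2 \<longleftrightarrow> {g p, g q} \<in> uedges t3"
      "\<forall>p \<in> uverts t2. ulabel t3 (g p) = ulabel t2 p"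
    using assms(2) unfolding identical_unrooted_def by blast
  have fm: "\<And>p. p \<in> uverts t1 \<Longrightarrow> f p \<in> uverts t2" using f(1) bij_betwE by blast
  show ?thesis unfolding identical_unrooted_def
  proof (intro exI conjI)
    show "bij_betw (g \<circ> f) (uverts t1) (uverts t3)" using bij_betw_trans f(1) g(1) by blast
    show "\<forall>p\<in>uverts t1. \<forall>q\<in>uverts t1. ({p, q} \<in> uedges t1) = ({(g \<circ> f) p, (g \<circ> f) q} \<in> uedges t3)"
      using f(2) g(2) fm by simp
    show "\<forall>p\<in>uverts t1. ulabel t3 ((g \<circ> f) p) = ulabel t1 p"
      using f(3) g(3) fm by simp
  qed
qed

lemma cat_crit:
  assumes "\<forall>p \<in> positions t. \<forall>l r. subtree t p = Nd l r \<longrightarrow> (\<exists>a. l = Lf a) \<or> (\<exists>a. r = Lf a)"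
  shows "caterpillar_unrooted t"
  unfolding caterpillar_unrooted_def
proof (intro ballI impI)
  fix v assume v: "v \<in> uverts t" "ulabel t v = None"
  show "\<exists>u\<in>uverts t. {u, v} \<in> uedges t \<and> ulabel t u \<noteq> None"
  proof (cases t)
    case (Lf a)
    then show ?thesis using v by (simp add: uverts_def ulabel_def)
  next
    case (Nd l0 r0)
    have vp: "v \<in> positions t" "v \<noteq> []" using v Nd by (auto simp: uverts_def)
    then obtain l r where st: "subtree t v = Nd l r" using v(2) unfolding ulabel_def
      by (cases "subtree t v") auto
    obtain b a where ba: "subtree (Nd l r) [b] = Lf a"
      using assms vp st by (metis subtree.simps(1,2,3))
    have up: "v @ [b] \<in> positions t" using pos_append[OF vp(1)] st by (cases b) auto
    have ul: "ulabel t (v @ [b]) = Some a" using up subtree_append[OF vp(1)] st ba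
      by (simp add: ulabel_def)
    have uv: "v @ [b] \<in> uverts t" using up Nd by (simp add: uverts_def)
    have "{v @ [b], v} \<in> uedges t" using up vp(2) unfolding uedges_def
      by (auto simp: insert_commute)
    then show ?thesis using uv ul by blast
  qed
qed

lemma lcs_prop: "lcs t \<Longrightarrow> p \<in> positions t \<Longrightarrow> subtree t p = Nd l r \<Longrightarrow> \<exists>a. r = Lf a"
proof (induction t arbitrary: p)
  case (Lf x) then show ?case by auto
next
  case (Nd l' r') then show ?case
    by (cases p) (auto split: bool.splits)
qed

lemma rcs_prop: "rcs t \<Longrightarrow> p \<in> positions t \<Longrightarrow> subtree t p = Nd l r \<Longrightarrow> \<exists>a. l = Lf a"
proof (induction t arbitrary: p)
  case (Lf x) then show ?case by auto
next
  case (Nd l' r') then show ?case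
    by (cases p) (auto split: bool.splits)
qed

lemma lcs_cat: assumes "lcs t" shows "caterpillar_unrooted t"
  apply (rule cat_crit) using lcs_prop[OF assms] by blast

lemma rcs_cat: assumes "rcs t" shows "caterpillar_unrooted t"
  apply (rule cat_crit) using rcs_prop[OF assms] by blast

lemma rcs_unique: "rcs t1 \<Longrightarrow> rcs t2 \<Longrightarrow> leaves t1 = leaves t2 \<Longrightarrow> t1 = t2"
proof (induction t1 arbitrary: t2)
  case (Lf a)
  show ?case
  proof (cases t2)
    case (Nd x y)
    have "length (leaves (Lf a)) = length (leaves t2)" using Lf.prems by simp
    with Nd length_leaves_Nd[of x y] show ?thesis by simp
  qed (use Lf in simp)
next
  case (Nd l r)
  then obtain a where l: "l = Lf a" by auto
  show ?case
  proof (cases t2)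
    case (Lf b)
    then show ?thesis using Nd.prems length_leaves_Nd[of l r] by simp
  next
    case (Nd l2 r2)
    then obtain b where l2: "l2 = Lf b" using Nd.prems by auto
    then show ?thesis using Nd.IH(2)[of r2] Nd.prems Nd l by auto
  qed
qed

lemma W_ident: "lcs L \<Longrightarrow> rcs R \<Longrightarrow> rcs R' \<Longrightarrow> leaves R' = leaves L @ leaves R \<Longrightarrow>
   identical_unrooted (Nd L R) R'"
proof (induction L arbitrary: R)
  case (Lf a)
  have "Nd (Lf a) R = R'" using rcs_unique[of "Nd (Lf a) R" R'] Lf by simp
  then show ?case using ident_refl by metis
next
  case (Nd L' M)
  then obtain a where M: "M = Lf a" by auto
  have "identical_unrooted (Nd L' (Nd (Lf a) R)) R'"
    using Nd.IH(1)[of "Nd (Lf a) R"] Nd.prems M by simp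
  then show ?case using rot_ident[of L' M R] ident_trans M by blast
qed

lemma lc_rc_ident: "lcs s1 \<Longrightarrow> rcs s2 \<Longrightarrow> leaves s1 = leaves s2 \<Longrightarrow> identical_unrooted s1 s2"
proof (cases s1)
  case (Lf a)
  assume "lcs s1" "rcs s2" "leaves s1 = leaves s2"
  then have "s1 = s2" using rcs_unique Lf by (metis rcs.simps(1))
  then show ?thesis using ident_refl by metis
next
  case (Nd L R)
  assume h: "lcs s1" "rcs s2" "leaves s1 = leaves s2"
  then obtain a where "R = Lf a" using Nd by auto
  then show ?thesis using W_ident[of L R s2] h Nd by simp
qed

lemma card_fibers:
  assumes "finite S" "\<forall>y \<in> f ` S. real (card {x\<in>S. f x = y}) \<le> m"
  shows "real (card S) \<le> real (card (f ` S)) * m"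
proof -
  have eq: "(\<Union>y\<in>f ` S. {x\<in>S. f x = y}) = S" by auto
  have "card (\<Union>y\<in>f ` S. {x\<in>S. f x = y}) \<le> (\<Sum>y\<in>f ` S. card {x\<in>S. f x = y})"
    by (rule card_UN_le) (use assms(1) in simp)
  then have "card S \<le> (\<Sum>y\<in>f ` S. card {x\<in>S. f x = y})" by (simp only: eq)
  then have "real (card S) \<le> (\<Sum>y\<in>f ` S. real (card {x\<in>S. f x = y}))"
    by (simp only: of_nat_sum[symmetric] of_nat_le_iff)
  also have "\<dots> \<le> (\<Sum>y\<in>f ` S. m)" by (rule sum_mono) (use assms(2) in blast)
  also have "\<dots> = real (card (f ` S)) * m" by simp
  finally show ?thesis .
qed

lemma reps:
  assumes "finite S"
  obtains U where "U \<subseteq> S" "inj_on f U" "card U = card (f ` S)"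
proof -
  let ?U = "inv_into S f ` (f ` S)"
  have "?U \<subseteq> S" by (auto intro: inv_into_into)
  moreover have "inj_on f ?U" by (auto simp: inj_on_def f_inv_into_f)
  moreover have "card ?U = card (f ` S)"
    by (rule card_image) (rule inj_on_inv_into, simp)
  ultimately show ?thesis using that by blast
qed

lemma chain_lemma:
  assumes mi: "\<forall>i j. i \<le> j \<longrightarrow> j < N \<longrightarrow> ia i \<le> (ia j::nat)"
    and mj: "\<forall>i j. i \<le> j \<longrightarrow> j < N \<longrightarrow> jb i \<le> (jb j::nat)"
    and v: "v \<le> N" and B: "B > 0"
    and fib: "\<forall>i. u \<le> i \<longrightarrow> i < v \<longrightarrow> real (card {j. u \<le> j \<and> j < v \<and> ia j = ia i}) \<le> B \<and>
                   real (card {j. u \<le> j \<and> j < v \<and> jb j = jb i}) \<le> B"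
  shows "\<exists>A \<subseteq> {u..<v}. inj_on ia A \<and> inj_on jb A \<and> real (v - u) \<le> 2 * B * real (card A)"
  using v fib
proof (induction "v - u" arbitrary: u rule: less_induct)
  case less
  show ?case
  proof (cases "u < v")
    case False
    then show ?thesis by (rule_tac x="{}" in exI) auto
  next
    case True
    define P where "P j \<longleftrightarrow> u \<le> j \<and> j < v \<and> ia j \<noteq> ia u \<and> jb j \<noteq> jb u" for j
    define u' where "u' = (if \<exists>j. P j then (LEAST j. P j) else v)"
    have uu': "u < u'"
    proof (cases "\<exists>j. P j")
      case True
      then have "P (LEAST j. P j)" by (rule LeastI_ex)
      then have "(LEAST j. P j) \<noteq> u" unfolding P_def by auto
      moreover have "u \<le> (LEAST j. P j)" using \<open>P (LEAST j. P j)\<close> unfolding P_def by auto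
      ultimately show ?thesis using True unfolding u'_def by auto
    qed (use True u'_def in auto)
    have u'v: "u' \<le> v"
    proof (cases "\<exists>j. P j")
      case True
      then have "P (LEAST j. P j)" by (rule LeastI_ex)
      then show ?thesis using True unfolding u'_def P_def by auto
    qed (use u'_def in auto)
    have below: "\<And>j. u \<le> j \<Longrightarrow> j < u' \<Longrightarrow> ia j = ia u \<or> jb j = jb u"
    proof -
      fix j assume j: "u \<le> j" "j < u'"
      show "ia j = ia u \<or> jb j = jb u"
      proof (rule ccontr)
        assume "\<not> (ia j = ia u \<or> jb j = jb u)"
        then have "P j" using j u'v unfolding P_def by auto
        then have le: "(LEAST j. P j) \<le> j" by (rule Least_le)
        have "\<exists>j. P j" using \<open>P j\<close> by blast
        then have "u' = (LEAST j. P j)" unfolding u'_def by simp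
        then show False using le j(2) by simp
      qed
    qed
    have above: "\<And>j. u' \<le> j \<Longrightarrow> j < v \<Longrightarrow> ia j > ia u \<and> jb j > jb u"
    proof -
      fix j assume j: "u' \<le> j" "j < v"
      then have ex: "\<exists>j. P j" unfolding u'_def by (cases "\<exists>j. P j") auto
      then have Pu': "P u'" unfolding u'_def by (simp add: LeastI_ex)
      have "ia u \<le> ia u'" "jb u \<le> jb u'" using mi mj Pu' less.prems(1) unfolding P_def by auto
      moreover have "ia u' \<le> ia j" "jb u' \<le> jb j" using mi mj j less.prems(1) by auto
      ultimately show "ia j > ia u \<and> jb j > jb u" using Pu' unfolding P_def by auto
    qed
    have sub: "{u..<u'} \<subseteq> {j. u \<le> j \<and> j < v \<and> ia j = ia u} \<union> {j. u \<le> j \<and> j < v \<and> jb j = jb u}"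
      using below u'v by fastforce
    have finU: "finite ({j. u \<le> j \<and> j < v \<and> ia j = ia u} \<union> {j. u \<le> j \<and> j < v \<and> jb j = jb u})"
      by (rule finite_subset[of _ "{..<v}"]) auto
    have "card {u..<u'} \<le> card ({j. u \<le> j \<and> j < v \<and> ia j = ia u} \<union> {j. u \<le> j \<and> j < v \<and> jb j = jb u})"
      by (rule card_mono[OF finU sub])
    then have "real (u' - u) \<le> real (card ({j. u \<le> j \<and> j < v \<and> ia j = ia u} \<union> {j. u \<le> j \<and> j < v \<and> jb j = jb u}))"
      by (simp only: card_atLeastLessThan of_nat_le_iff)
    also have "\<dots> \<le> real (card {j. u \<le> j \<and> j < v \<and> ia j = ia u}) + real (card {j. u \<le> j \<and> j < v \<and> jb j = jb u})"
      by (simp only: of_nat_add[symmetric] of_nat_le_iff card_Un_le)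
    also have "\<dots> \<le> 2 * B" using less.prems(2) True by fastforce
    finally have step: "real (u' - u) \<le> 2 * B" .
    have fib': "\<forall>i. u' \<le> i \<longrightarrow> i < v \<longrightarrow> real (card {j. u' \<le> j \<and> j < v \<and> ia j = ia i}) \<le> B \<and>
                   real (card {j. u' \<le> j \<and> j < v \<and> jb j = jb i}) \<le> B"
    proof (intro allI impI)
      fix i assume i: "u' \<le> i" "i < v"
      have c1: "card {j. u' \<le> j \<and> j < v \<and> ia j = ia i} \<le> card {j. u \<le> j \<and> j < v \<and> ia j = ia i}"
        by (rule card_mono) (use uu' in auto)
      have c2: "card {j. u' \<le> j \<and> j < v \<and> jb j = jb i} \<le> card {j. u \<le> j \<and> j < v \<and> jb j = jb i}"
        by (rule card_mono) (use uu' in auto)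
      show "real (card {j. u' \<le> j \<and> j < v \<and> ia j = ia i}) \<le> B \<and>
                   real (card {j. u' \<le> j \<and> j < v \<and> jb j = jb i}) \<le> B"
      proof -
        have "u \<le> i" using i uu' by simp
        then have "real (card {j. u \<le> j \<and> j < v \<and> ia j = ia i}) \<le> B \<and> real (card {j. u \<le> j \<and> j < v \<and> jb j = jb i}) \<le> B"
          using less.prems(2) i by blast
        then show ?thesis using c1 c2 by linarith
      qed
    qed
    have lt: "v - u' < v - u" using uu' True by simp
    obtain A where A: "A \<subseteq> {u'..<v}" "inj_on ia A" "inj_on jb A" "real (v - u') \<le> 2 * B * real (card A)"
      using less.hyps[OF lt less.prems(1) fib'] by blast
    have uA: "u \<notin> A" using A(1) uu' by auto
    have finA: "finite A" using A(1) finite_subset by blast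
    have ne: "\<forall>x\<in>A. ia x \<noteq> ia u \<and> jb x \<noteq> jb u" using A(1) above by fastforce
    have "inj_on ia (insert u A)" using A(2) ne by (auto simp: inj_on_insert)
    moreover have "inj_on jb (insert u A)" using A(3) ne by (auto simp: inj_on_insert)
    moreover have "insert u A \<subseteq> {u..<v}" using A(1) True uu' by auto
    moreover have "real (v - u) \<le> 2 * B * real (card (insert u A))"
    proof -
      have "real (v - u) = real (v - u') + real (u' - u)" using uu' u'v by simp
      also have "\<dots> \<le> 2 * B * real (card A) + 2 * B" using A(4) step by simp
      also have "\<dots> = 2 * B * real (card (insert u A))" using finA uA by (simp add: algebra_simps)
      finally show ?thesis .
    qed
    ultimately show ?thesis by blast
  qed
qed

definition fib :: "nat \<Rightarrow> (nat \<Rightarrow> nat) \<Rightarrow> nat \<Rightarrow> nat set" where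
  "fib N f a = {i. i < N \<and> f i = a}"

lemma fib_finite[simp]: "finite (fib N f a)"
  unfolding fib_def by auto

lemma region:
  fixes f g :: "nat \<Rightarrow> nat"
  assumes mf: "\<forall>i j. i \<le> j \<longrightarrow> j < N \<longrightarrow> f i \<le> f j"
    and mg: "\<forall>i j. i \<le> j \<longrightarrow> j < N \<longrightarrow> g i \<le> g j"
    and v: "v \<le> N" and al: "\<alpha> > 0" and K: "K \<ge> 1"
    and small: "\<forall>i. u \<le> i \<longrightarrow> i < v \<longrightarrow> real (card (fib N f (f i))) < \<alpha>"
    and noC: "\<forall>a. real (card (f ` fib N g a)) < K"
    and noB: "\<forall>A \<subseteq> {..<N}. inj_on f A \<longrightarrow> inj_on g A \<longrightarrow> real (card A) < L"
  shows "real (v - u) \<le> 2 * (K * \<alpha>) * L"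
proof -
  have KA: "K * \<alpha> > 0" using al K by simp
  have fibs: "\<forall>i. u \<le> i \<longrightarrow> i < v \<longrightarrow> real (card {j. u \<le> j \<and> j < v \<and> f j = f i}) \<le> K * \<alpha> \<and>
                   real (card {j. u \<le> j \<and> j < v \<and> g j = g i}) \<le> K * \<alpha>"
  proof (intro allI impI conjI)
    fix i assume i: "u \<le> i" "i < v"
    have "card {j. u \<le> j \<and> j < v \<and> f j = f i} \<le> card (fib N f (f i))"
      by (rule card_mono) (use v in \<open>auto simp: fib_def\<close>)
    then have "real (card {j. u \<le> j \<and> j < v \<and> f j = f i}) < \<alpha>" using small i by fastforce
    moreover have "\<alpha> \<le> K * \<alpha>" using K al by simp
    ultimately show "real (card {j. u \<le> j \<and> j < v \<and> f j = f i}) \<le> K * \<alpha>" by linarith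
  next
    fix i assume i: "u \<le> i" "i < v"
    define S where "S = {j. u \<le> j \<and> j < v \<and> g j = g i}"
    have finS: "finite S" unfolding S_def by (rule finite_subset[of _ "{..<v}"]) auto
    have fibS: "\<forall>y \<in> f ` S. real (card {x\<in>S. f x = y}) \<le> \<alpha>"
    proof
      fix y assume "y \<in> f ` S"
      then obtain x0 where x0: "x0 \<in> S" "y = f x0" by blast
      have "card {x\<in>S. f x = y} \<le> card (fib N f (f x0))"
        by (rule card_mono) (use v x0 in \<open>auto simp: fib_def S_def\<close>)
      moreover have "real (card (fib N f (f x0))) < \<alpha>" using small x0 unfolding S_def by blast
      ultimately show "real (card {x\<in>S. f x = y}) \<le> \<alpha>" by linarith
    qed
    have "real (card S) \<le> real (card (f ` S)) * \<alpha>" by (rule card_fibers[OF finS fibS])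
    moreover have "card (f ` S) \<le> card (f ` fib N g (g i))"
      by (rule card_mono) (use v in \<open>auto simp: fib_def S_def\<close>)
    moreover have "real (card (f ` fib N g (g i))) < K" using noC by blast
    ultimately have "real (card S) \<le> K * \<alpha>" using al
      by (smt (verit, best) mult_right_mono of_nat_le_iff)
    then show "real (card {j. u \<le> j \<and> j < v \<and> g j = g i}) \<le> K * \<alpha>" unfolding S_def .
  qed
  obtain A where A: "A \<subseteq> {u..<v}" "inj_on f A" "inj_on g A" "real (v - u) \<le> 2 * (K * \<alpha>) * real (card A)"
    using chain_lemma[OF mf mg v KA fibs] by blast
  have "A \<subseteq> {..<N}" using A(1) v by auto
  then have "real (card A) < L" using noB A by blast
  then have "2 * (K * \<alpha>) * real (card A) \<le> 2 * (K * \<alpha>) * L" using KA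
    by (intro mult_left_mono) auto
  then show ?thesis using A(4) by linarith
qed

lemma region_mid:
  fixes f g :: "nat \<Rightarrow> nat"
  assumes mf: "\<forall>i j. i \<le> j \<longrightarrow> j < N \<longrightarrow> f i \<le> f j"
    and mg: "\<forall>i j. i \<le> j \<longrightarrow> j < N \<longrightarrow> g i \<le> g j"
    and v: "v \<le> N" and M: "M > 0"
    and small: "\<forall>i. u \<le> i \<longrightarrow> i < v \<longrightarrow> real (card (fib N f (f i))) < M \<and> real (card (fib N g (g i))) < M"
    and noB: "\<forall>A \<subseteq> {..<N}. inj_on f A \<longrightarrow> inj_on g A \<longrightarrow> real (card A) < L"
  shows "real (v - u) \<le> 2 * M * L"
proof -
  have fibs: "\<forall>i. u \<le> i \<longrightarrow> i < v \<longrightarrow> real (card {j. u \<le> j \<and> j < v \<and> f j = f i}) \<le> M \<and>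
                   real (card {j. u \<le> j \<and> j < v \<and> g j = g i}) \<le> M"
  proof (intro allI impI conjI)
    fix i assume i: "u \<le> i" "i < v"
    have "card {j. u \<le> j \<and> j < v \<and> f j = f i} \<le> card (fib N f (f i))"
      by (rule card_mono) (use v in \<open>auto simp: fib_def\<close>)
    then show "real (card {j. u \<le> j \<and> j < v \<and> f j = f i}) \<le> M" using small i
      by (smt (verit) of_nat_le_iff)
  next
    fix i assume i: "u \<le> i" "i < v"
    have "card {j. u \<le> j \<and> j < v \<and> g j = g i} \<le> card (fib N g (g i))"
      by (rule card_mono) (use v in \<open>auto simp: fib_def\<close>)
    then show "real (card {j. u \<le> j \<and> j < v \<and> g j = g i}) \<le> M" using small i
      by (smt (verit) of_nat_le_iff)
  qed
  obtain A where A: "A \<subseteq> {u..<v}" "inj_on f A" "inj_on g A" "real (v - u) \<le> 2 * M * real (card A)"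
    using chain_lemma[OF mf mg v M fibs] by blast
  have "A \<subseteq> {..<N}" using A(1) v by auto
  then have "real (card A) < L" using noB A by blast
  then have "2 * M * real (card A) \<le> 2 * M * L" using M by simp
  then show ?thesis using A(4) by linarith
qed

lemma CL:
  fixes ia jb :: "nat \<Rightarrow> nat" and \<alpha> M K L :: real
  assumes mi: "\<forall>i j. i \<le> j \<longrightarrow> j < N \<longrightarrow> ia i \<le> ia j"
    and mj: "\<forall>i j. i \<le> j \<longrightarrow> j < N \<longrightarrow> jb i \<le> jb j"
    and szI: "\<forall>a. real (card (fib N ia a)) \<le> real N / 20"
    and szJ: "\<forall>c. real (card (fib N jb c)) \<le> real N / 20"
    and al: "\<alpha> > 0" and M: "M > 0" and K: "K \<ge> 1"
    and noA: "\<forall>c a. (\<forall>p<N. \<forall>q<N. jb p = c \<longrightarrow> ia q = a \<longrightarrow> p < q) \<longrightarrow>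
       \<not> ((\<alpha> \<le> real (card (fib N jb c)) \<and> M \<le> real (card (fib N ia a))) \<or>
          (M \<le> real (card (fib N jb c)) \<and> \<alpha> \<le> real (card (fib N ia a))))"
    and noB: "\<forall>A \<subseteq> {..<N}. inj_on ia A \<longrightarrow> inj_on jb A \<longrightarrow> real (card A) < L"
    and noC1: "\<forall>c. real (card (ia ` fib N jb c)) < K"
    and noC2: "\<forall>a. real (card (jb ` fib N ia a)) < K"
  shows "real N \<le> 4 * (K * \<alpha>) * L + real N / 5 + 2 * M * L"
proof -
  have "real (card ({}::nat set)) < L" using noB[rule_format, of "{}"] by simp
  then have L0: "L > 0" by simp
  have noB': "\<forall>A \<subseteq> {..<N}. inj_on jb A \<longrightarrow> inj_on ia A \<longrightarrow> real (card A) < L"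
  proof (intro allI impI)
    fix A assume "A \<subseteq> {..<N}" "inj_on jb A" "inj_on ia A"
    then show "real (card A) < L" using noB by simp
  qed
  have KAL: "0 \<le> K * \<alpha> * L" using K al L0 by (intro mult_nonneg_nonneg) auto
  have ML0: "0 \<le> M * L" using M L0 by (intro mult_nonneg_nonneg) auto
  define bigJ where "bigJ i \<longleftrightarrow> i < N \<and> \<alpha> \<le> real (card (fib N jb (jb i)))" for i
  define bigI where "bigI i \<longleftrightarrow> i < N \<and> \<alpha> \<le> real (card (fib N ia (ia i)))" for i
  show ?thesis
  proof (cases "\<exists>i. bigJ i")
    case False
    have "real (N - 0) \<le> 2 * (K * \<alpha>) * L"
      by (rule region[OF mj mi _ al K _ noC2 noB']) (use False bigJ_def in \<open>auto simp: not_le\<close>)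
    then show ?thesis using KAL ML0 by simp
  next
    case exJ: True
    show ?thesis
    proof (cases "\<exists>i. bigI i")
      case False
      have "real (N - 0) \<le> 2 * (K * \<alpha>) * L"
        by (rule region[OF mi mj _ al K _ noC1 noB]) (use False bigI_def in \<open>auto simp: not_le\<close>)
      then show ?thesis using KAL ML0 by simp
    next
      case exI: True
      define P1 where "P1 = (LEAST i. bigJ i)"
      have bP1: "bigJ P1" unfolding P1_def using exJ by (metis LeastI)
      have P1N: "P1 < N" using bP1 bigJ_def by simp
      define P2 where "P2 = (GREATEST i. bigI i)"
      obtain k where k: "bigI k" using exI by blast
      have bnd: "\<And>y. bigI y \<Longrightarrow> y \<le> N" by (simp add: bigI_def)
      have bP2: "bigI P2" unfolding P2_def by (rule GreatestI_nat[of bigI k N, OF k bnd])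
      have P2ge: "\<And>i. bigI i \<Longrightarrow> i \<le> P2" unfolding P2_def using Greatest_le_nat[of bigI _ N] bnd by blast
      have P2N: "P2 < N" using bP2 bigI_def by simp
      have R1: "real (P1 - 0) \<le> 2 * (K * \<alpha>) * L"
      proof (rule region[OF mj mi _ al K _ noC2 noB'])
        show "P1 \<le> N" using P1N by simp
        show "\<forall>i. 0 \<le> i \<longrightarrow> i < P1 \<longrightarrow> real (card (fib N jb (jb i))) < \<alpha>"
        proof (intro allI impI)
          fix i assume "0 \<le> i" "i < P1"
          then have "\<not> bigJ i" unfolding P1_def using not_less_Least by blast
          then show "real (card (fib N jb (jb i))) < \<alpha>" using \<open>i < P1\<close> P1N bigJ_def by auto
        qed
      qed
      have R3: "real (N - Suc P2) \<le> 2 * (K * \<alpha>) * L"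
      proof (rule region[OF mi mj _ al K _ noC1 noB])
        show "N \<le> N" by simp
        show "\<forall>i. Suc P2 \<le> i \<longrightarrow> i < N \<longrightarrow> real (card (fib N ia (ia i))) < \<alpha>"
        proof (intro allI impI)
          fix i assume i: "Suc P2 \<le> i" "i < N"
          then have "\<not> bigI i" using P2ge by fastforce
          then show "real (card (fib N ia (ia i))) < \<alpha>" using i bigI_def by auto
        qed
      qed
      define c1 where "c1 = jb P1"
      define e1 where "e1 = (GREATEST i. i < N \<and> jb i = c1)"
      have e1p: "e1 < N \<and> jb e1 = c1" unfolding e1_def
        by (rule GreatestI_nat[of _ P1 N]) (use P1N c1_def in auto)
      have e1ge: "\<And>i. i < N \<Longrightarrow> jb i = c1 \<Longrightarrow> i \<le> e1" unfolding e1_def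
        by (rule Greatest_le_nat[of _ _ N]) auto
      define endI where "endI = (GREATEST i. i < N \<and> ia i = ia e1)"
      have endIp: "endI < N \<and> ia endI = ia e1" unfolding endI_def
        by (rule GreatestI_nat[of _ e1 N]) (use e1p in auto)
      have endIge: "\<And>i. i < N \<Longrightarrow> ia i = ia e1 \<Longrightarrow> i \<le> endI" unfolding endI_def
        by (rule Greatest_le_nat[of _ _ N]) auto
      define a2 where "a2 = ia P2"
      define s2 where "s2 = (LEAST i. i < N \<and> ia i = a2)"
      have s2p: "s2 < N \<and> ia s2 = a2" unfolding s2_def by (rule LeastI[of _ P2]) (use P2N a2_def in auto)
      have s2le: "\<And>i. i < N \<Longrightarrow> ia i = a2 \<Longrightarrow> s2 \<le> i" unfolding s2_def by (rule Least_le) auto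
      define v where "v = (LEAST i. i < N \<and> jb i = jb s2)"
      have vp: "v < N \<and> jb v = jb s2" unfolding v_def by (rule LeastI[of _ s2]) (use s2p in auto)
      have vle: "\<And>i. i < N \<Longrightarrow> jb i = jb s2 \<Longrightarrow> v \<le> i" unfolding v_def by (rule Least_le) auto
      have vs2: "v \<le> s2" using vle s2p by auto
      define u where "u = Suc endI"
      have e1endI: "e1 \<le> endI" using endIge e1p by auto
      have R2: "real (v - u) \<le> 2 * M * L"
      proof (rule region_mid[OF mi mj _ M _ noB])
        show "v \<le> N" using vp by simp
        show "\<forall>i. u \<le> i \<longrightarrow> i < v \<longrightarrow> real (card (fib N ia (ia i))) < M \<and> real (card (fib N jb (jb i))) < M"
        proof (intro allI impI conjI)
          fix i assume i: "u \<le> i" "i < v"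
          have iN: "i < N" using i vp by simp
          have "ia e1 \<le> ia i" using mi e1endI i iN unfolding u_def by auto
          moreover have "ia i \<noteq> ia e1" using endIge[OF iN] i unfolding u_def by fastforce
          ultimately have gt: "ia e1 < ia i" by simp
          have bef: "\<forall>p<N. \<forall>q<N. jb p = c1 \<longrightarrow> ia q = ia i \<longrightarrow> p < q"
          proof (intro allI impI)
            fix p q assume pq: "p < N" "q < N" "jb p = c1" "ia q = ia i"
            have "p \<le> e1" using e1ge pq by simp
            moreover have "e1 < q"
            proof (rule ccontr)
              assume "\<not> e1 < q"
              then have "ia q \<le> ia e1" using mi e1p by simp
              then show False using gt pq by simp
            qed
            ultimately show "p < q" by simp
          qed
          have "\<alpha> \<le> real (card (fib N jb c1))" using bP1 bigJ_def c1_def by simp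
          then show "real (card (fib N ia (ia i))) < M" using noA bef by fastforce
        next
          fix i assume i: "u \<le> i" "i < v"
          have iN: "i < N" using i vp by simp
          have "jb i \<le> jb s2" using mj i vp by (metis less_imp_le)
          moreover have "jb i \<noteq> jb s2" using vle[OF iN] i by fastforce
          ultimately have lt: "jb i < jb s2" by simp
          have bef: "\<forall>p<N. \<forall>q<N. jb p = jb i \<longrightarrow> ia q = a2 \<longrightarrow> p < q"
          proof (intro allI impI)
            fix p q assume pq: "p < N" "q < N" "jb p = jb i" "ia q = a2"
            have "p < v"
            proof (rule ccontr)
              assume "\<not> p < v"
              then have "jb v \<le> jb p" using mj pq by (metis not_less)
              then show False using vp lt pq by simp
            qed
            moreover have "s2 \<le> q" using s2le pq by simp
            ultimately show "p < q" using vs2 by simp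
          qed
          have "\<alpha> \<le> real (card (fib N ia a2))" using bP2 bigI_def a2_def by simp
          then show "real (card (fib N jb (jb i))) < M" using noA bef by fastforce
        qed
      qed
      have cover: "{..<N} \<subseteq> {..<P1} \<union> fib N jb c1 \<union> fib N ia (ia e1) \<union> {u..<v} \<union> fib N jb (jb s2)
          \<union> fib N ia a2 \<union> {Suc P2..<N}"
      proof
        fix i assume "i \<in> {..<N}"
        then have iN: "i < N" by simp
        show "i \<in> {..<P1} \<union> fib N jb c1 \<union> fib N ia (ia e1) \<union> {u..<v} \<union> fib N jb (jb s2)
          \<union> fib N ia a2 \<union> {Suc P2..<N}"
        proof (cases "i < P1")
          case False
          show ?thesis
          proof (cases "i \<le> e1")
            case True
            have "jb P1 \<le> jb i" using mj[rule_format, of P1 i] False iN by simp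
            moreover have "jb i \<le> jb e1" using mj[rule_format, of i e1] True e1p by simp
            ultimately have "jb P1 \<le> jb i" "jb i \<le> jb e1" by auto
            then have "i \<in> fib N jb c1" using e1p c1_def iN by (simp add: fib_def)
            then show ?thesis by blast
          next
            case ne1: False
            show ?thesis
            proof (cases "i \<le> endI")
              case True
              have "ia e1 \<le> ia i" using mi[rule_format, of e1 i] ne1 iN by simp
              moreover have "ia i \<le> ia endI" using mi[rule_format, of i endI] True endIp by simp
              ultimately have "ia e1 \<le> ia i" "ia i \<le> ia endI" by auto
              then have "i \<in> fib N ia (ia e1)" using endIp iN by (simp add: fib_def)
              then show ?thesis by blast
            next
              case nend: False
              show ?thesis
              proof (cases "i < v")
                case True
                then have "i \<in> {u..<v}" using nend u_def by simp
                then show ?thesis by blast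
              next
                case nv: False
                show ?thesis
                proof (cases "i < s2")
                  case True
                  have "jb v \<le> jb i" using mj[rule_format, of v i] nv iN by simp
                  moreover have "jb i \<le> jb s2" using mj[rule_format, of i s2] True s2p by simp
                  ultimately have "jb v \<le> jb i" "jb i \<le> jb s2" by auto
                  then have "i \<in> fib N jb (jb s2)" using vp iN by (simp add: fib_def)
                  then show ?thesis by blast
                next
                  case ns2: False
                  show ?thesis
                  proof (cases "i \<le> P2")
                    case True
                    have "ia s2 \<le> ia i" using mi[rule_format, of s2 i] ns2 iN by simp
                    moreover have "ia i \<le> ia P2" using mi[rule_format, of i P2] True P2N by simp
                    ultimately have "ia s2 \<le> ia i" "ia i \<le> ia P2" by auto
                    then have "i \<in> fib N ia a2" using s2p a2_def iN by (simp add: fib_def)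
                    then show ?thesis by blast
                  next
                    case False
                    then show ?thesis using iN by auto
                  qed
                qed
              qed
            qed
          qed
        qed simp
      qed
      have fins: "finite {..<P1}" "finite (fib N jb c1)" "finite (fib N ia (ia e1))" "finite {u..<v}"
        "finite (fib N jb (jb s2))" "finite (fib N ia a2)" "finite {Suc P2..<N}" by auto
      have "N \<le> card ({..<P1} \<union> fib N jb c1 \<union> fib N ia (ia e1) \<union> {u..<v} \<union> fib N jb (jb s2)
          \<union> fib N ia a2 \<union> {Suc P2..<N})"
        using card_mono[OF _ cover] fins by simp
      also have "\<dots> \<le> card {..<P1} + card (fib N jb c1) + card (fib N ia (ia e1)) + card {u..<v}
          + card (fib N jb (jb s2)) + card (fib N ia a2) + card {Suc P2..<N}"
      proof -
        let ?A1 = "{..<P1}" and ?A2 = "fib N jb c1" and ?A3 = "fib N ia (ia e1)" and ?A4 = "{u..<v}"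
          and ?A5 = "fib N jb (jb s2)" and ?A6 = "fib N ia a2" and ?A7 = "{Suc P2..<N}"
        have "card (?A1 \<union> ?A2 \<union> ?A3 \<union> ?A4 \<union> ?A5 \<union> ?A6 \<union> ?A7) \<le> card (?A1 \<union> ?A2 \<union> ?A3 \<union> ?A4 \<union> ?A5 \<union> ?A6) + card ?A7" by (rule card_Un_le)
        moreover have "card (?A1 \<union> ?A2 \<union> ?A3 \<union> ?A4 \<union> ?A5 \<union> ?A6) \<le> card (?A1 \<union> ?A2 \<union> ?A3 \<union> ?A4 \<union> ?A5) + card ?A6" by (rule card_Un_le)
        moreover have "card (?A1 \<union> ?A2 \<union> ?A3 \<union> ?A4 \<union> ?A5) \<le> card (?A1 \<union> ?A2 \<union> ?A3 \<union> ?A4) + card ?A5" by (rule card_Un_le)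
        moreover have "card (?A1 \<union> ?A2 \<union> ?A3 \<union> ?A4) \<le> card (?A1 \<union> ?A2 \<union> ?A3) + card ?A4" by (rule card_Un_le)
        moreover have "card (?A1 \<union> ?A2 \<union> ?A3) \<le> card (?A1 \<union> ?A2) + card ?A3" by (rule card_Un_le)
        moreover have "card (?A1 \<union> ?A2) \<le> card ?A1 + card ?A2" by (rule card_Un_le)
        ultimately show ?thesis by linarith
      qed
      finally have "real N \<le> real P1 + real (card (fib N jb c1)) + real (card (fib N ia (ia e1))) + real (v - u)
          + real (card (fib N jb (jb s2))) + real (card (fib N ia a2)) + real (N - Suc P2)"
        by (simp only: card_lessThan card_atLeastLessThan of_nat_add[symmetric] of_nat_le_iff)
      moreover have "real (card (fib N jb c1)) \<le> real N / 20" "real (card (fib N ia (ia e1))) \<le> real N / 20"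
        "real (card (fib N jb (jb s2))) \<le> real N / 20" "real (card (fib N ia a2)) \<le> real N / 20"
        using szI szJ by blast+
      moreover have "real P1 \<le> 2 * (K * \<alpha>) * L" using R1 by simp
      ultimately show ?thesis using R2 R3 by linarith
    qed
  qed
qed

fun bidx :: "'a list list \<Rightarrow> nat \<Rightarrow> nat" where
  "bidx [] i = 0"
| "bidx (l # ls) i = (if i < length l then 0 else Suc (bidx ls (i - length l)))"

lemma bidx_in: "i < length (concat ls) \<Longrightarrow> bidx ls i < length ls \<and> concat ls ! i \<in> set (ls ! bidx ls i)"
proof (induction ls arbitrary: i)
  case Nil then show ?case by simp
next
  case (Cons l ls)
  show ?case
  proof (cases "i < length l")
    case True then show ?thesis by (simp add: nth_append)
  next
    case False
    then have "i - length l < length (concat ls)" using Cons.prems by simp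
    then show ?thesis using Cons.IH False by (simp add: nth_append)
  qed
qed

lemma bidx_mono: "i \<le> j \<Longrightarrow> bidx ls i \<le> bidx ls j"
proof (induction ls arbitrary: i j)
  case Nil then show ?case by simp
next
  case (Cons l ls) then show ?case by (auto simp: diff_le_mono)
qed

lemma bidx_eq:
  "distinct (concat ls) \<Longrightarrow> i < length (concat ls) \<Longrightarrow> b < length ls \<Longrightarrow> concat ls ! i \<in> set (ls ! b) \<Longrightarrow> bidx ls i = b"
proof (induction ls arbitrary: i b)
  case Nil then show ?case by simp
next
  case (Cons l ls)
  show ?case
  proof (cases "i < length l")
    case True
    then have x: "concat (l # ls) ! i \<in> set l" by (simp add: nth_append)
    show ?thesis
    proof (cases b)
      case (Suc b')
      then have "concat (l # ls) ! i \<in> set (concat ls)" using Cons.prems by (auto simp: set_concat)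
      then show ?thesis using x Cons.prems(1) by auto
    qed (use True in simp)
  next
    case False
    then have i': "i - length l < length (concat ls)" using Cons.prems by simp
    have x: "concat (l # ls) ! i = concat ls ! (i - length l)" using False by (simp add: nth_append)
    then have xin: "concat (l # ls) ! i \<in> set (concat ls)" using i' nth_mem by metis
    show ?thesis
    proof (cases b)
      case 0
      then show ?thesis using xin Cons.prems by auto
    next
      case (Suc b')
      then show ?thesis using Cons.IH[of "i - length l" b'] Cons.prems i' x False by simp
    qed
  qed
qed

lemma bidx_image:
  assumes "distinct (concat ls)" "b < length ls"
  shows "(\<lambda>i. concat ls ! i) ` {i. i < length (concat ls) \<and> bidx ls i = b} = set (ls ! b)"
proof
  show "(\<lambda>i. concat ls ! i) ` {i. i < length (concat ls) \<and> bidx ls i = b} \<subseteq> set (ls ! b)"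
    using bidx_in by fastforce
  show "set (ls ! b) \<subseteq> (\<lambda>i. concat ls ! i) ` {i. i < length (concat ls) \<and> bidx ls i = b}"
  proof
    fix x assume x: "x \<in> set (ls ! b)"
    then have "x \<in> set (concat ls)" using assms(2) by (auto simp: set_concat)
    then obtain i where i: "i < length (concat ls)" "concat ls ! i = x" by (metis in_set_conv_nth)
    then have "bidx ls i = b" using bidx_eq assms x by metis
    then show "x \<in> (\<lambda>i. concat ls ! i) ` {i. i < length (concat ls) \<and> bidx ls i = b}" using i by auto
  qed
qed

lemma lcs_unique: "lcs t1 \<Longrightarrow> lcs t2 \<Longrightarrow> leaves t1 = leaves t2 \<Longrightarrow> t1 = t2"
proof (induction t1 arbitrary: t2)
  case (Lf a)
  show ?case
  proof (cases t2)
    case (Nd x y)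
    have "length (leaves (Lf a)) = length (leaves t2)" using Lf.prems by simp
    with Nd length_leaves_Nd[of x y] show ?thesis by simp
  qed (use Lf in simp)
next
  case (Nd l r)
  then obtain a where r: "r = Lf a" by auto
  show ?case
  proof (cases t2)
    case (Lf b)
    then show ?thesis using Nd.prems length_leaves_Nd[of l r] by simp
  next
    case (Nd l2 r2)
    then obtain b where r2: "r2 = Lf b" using Nd.prems by auto
    then show ?thesis using Nd.IH(1)[of l2] Nd.prems Nd r by auto
  qed
qed

lemma finish:
  assumes "(lcs S1 \<and> (lcs S2 \<or> rcs S2)) \<or> (rcs S2 \<and> (lcs S1 \<or> rcs S1))" "leaves S1 = leaves S2"
  shows "caterpillar_unrooted S1 \<and> caterpillar_unrooted S2 \<and> identical_unrooted S1 S2"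
proof -
  have c1: "caterpillar_unrooted S1" using assms lcs_cat rcs_cat by blast
  have c2: "caterpillar_unrooted S2" using assms lcs_cat rcs_cat by blast
  have "identical_unrooted S1 S2"
  proof (cases "lcs S1")
    case True
    show ?thesis
    proof (cases "lcs S2")
      case True
      then have "S1 = S2" using lcs_unique \<open>lcs S1\<close> assms(2) by blast
      then show ?thesis using ident_refl by metis
    next
      case False
      then have "rcs S2" using assms True by blast
      then show ?thesis using lc_rc_ident True assms(2) by blast
    qed
  next
    case False
    then have "rcs S2" "rcs S1" using assms by blast+
    then have "S1 = S2" using rcs_unique assms(2) by blast
    then show ?thesis using ident_refl by metis
  qed
  then show ?thesis using c1 c2 by blast
qed

lemma ln2_half: "ln (2::real) \<ge> 1/2"
proof -
  have "ln (1/2::real) \<le> 1/2 - 1" by (rule ln_le_minus_one) simp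
  then show ?thesis by (simp add: ln_div)
qed

lemma log_bound:
  fixes n :: real assumes n: "n \<ge> 1"
  shows "log 2 n \<le> 9 * n powr (7/48)"
proof -
  define z where "z = n powr (7/48)"
  have z0: "z > 0" unfolding z_def using n by simp
  have lnn: "ln n = (48/7) * ln z" unfolding z_def using n by simp
  have "ln (z/2) \<le> z/2 - 1" by (rule ln_le_minus_one) (use z0 in simp)
  then have "ln z - ln 2 \<le> z/2 - 1" using z0 by (simp add: ln_div)
  moreover have "ln (2::real) < 1" by (rule ln_2_less_1)
  ultimately have lz: "ln z \<le> z / 2" by linarith
  have l2: "ln (2::real) \<ge> 1/2" by (rule ln2_half)
  have "log 2 n = ln n / ln 2" by (simp add: log_def)
  also have "\<dots> = (48/7) * (ln z / ln 2)" unfolding lnn by simp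
  also have "\<dots> \<le> (48/7) * ((z/2) / ln 2)"
    using lz l2 by (intro mult_left_mono divide_right_mono) auto
  also have "\<dots> \<le> (48/7) * z"
  proof -
    have "(z/2) / ln 2 \<le> z" using l2 z0 by (simp add: field_simps)
    then show ?thesis by simp
  qed
  also have "\<dots> \<le> 9 * z" using z0 by simp
  finally show ?thesis unfolding z_def .
qed

lemma num_main:
  fixes n :: real assumes n: "n \<ge> 1"
  shows "4 * (n powr (1/24) * n powr (1/16)) * (log 2 n / 48) \<le> (3/4) * n powr (1/4)"
proof -
  have e: "n powr (1/24) * n powr (1/16) = n powr (5/48)" using n by (simp add: powr_add[symmetric])
  have e2: "n powr (5/48) * n powr (7/48) = n powr (1/4)" using n by (simp add: powr_add[symmetric])
  have "4 * (n powr (1/24) * n powr (1/16)) * (log 2 n / 48) = n powr (5/48) * log 2 n / 12" using e by simp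
  also have "\<dots> \<le> n powr (5/48) * (9 * n powr (7/48)) / 12"
    using log_bound[OF n] n by (intro divide_right_mono mult_left_mono) auto
  also have "\<dots> = (3/4) * n powr (1/4)" using e2 by (simp add: algebra_simps)
  finally show ?thesis .
qed

definition ia_of :: "'a tree \<Rightarrow> nat \<Rightarrow> nat" where "ia_of T = bidx (map leaves (Qs T))"
definition jb_of :: "'a tree \<Rightarrow> nat \<Rightarrow> nat" where "jb_of T = bidx (map leaves (Rs T))"

lemma ia_in: "i < length (leaves T) \<Longrightarrow> ia_of T i < length (Qs T) \<and> leaves T ! i \<in> set (leaves (Qs T ! ia_of T i))"
proof -
  assume i: "i < length (leaves T)"
  then have i2: "i < length (concat (map leaves (Qs T)))" using Qs_leaves[of T] by simp
  have h: "bidx (map leaves (Qs T)) i < length (Qs T)" "concat (map leaves (Qs T)) ! i \<in> set (map leaves (Qs T) ! bidx (map leaves (Qs T)) i)"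
    using bidx_in[OF i2] by (simp only: length_map)+
  then show ?thesis using Qs_leaves[of T] unfolding ia_of_def by (simp add: nth_map)
qed

lemma jb_in: "i < length (leaves T) \<Longrightarrow> jb_of T i < length (Rs T) \<and> leaves T ! i \<in> set (leaves (Rs T ! jb_of T i))"
proof -
  assume i: "i < length (leaves T)"
  then have i2: "i < length (concat (map leaves (Rs T)))" using Rs_leaves[of T] by simp
  have h: "bidx (map leaves (Rs T)) i < length (Rs T)" "concat (map leaves (Rs T)) ! i \<in> set (map leaves (Rs T) ! bidx (map leaves (Rs T)) i)"
    using bidx_in[OF i2] by (simp only: length_map)+
  then show ?thesis using Rs_leaves[of T] unfolding jb_of_def by (simp add: nth_map)
qed

lemma ia_eq: "distinct (leaves T) \<Longrightarrow> i < length (leaves T) \<Longrightarrow> a < length (Qs T) \<Longrightarrow>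
   leaves T ! i \<in> set (leaves (Qs T ! a)) \<Longrightarrow> ia_of T i = a"
  using bidx_eq[of "map leaves (Qs T)" i a] Qs_leaves[of T] unfolding ia_of_def by simp

lemma jb_eq: "distinct (leaves T) \<Longrightarrow> i < length (leaves T) \<Longrightarrow> a < length (Rs T) \<Longrightarrow>
   leaves T ! i \<in> set (leaves (Rs T ! a)) \<Longrightarrow> jb_of T i = a"
  using bidx_eq[of "map leaves (Rs T)" i a] Rs_leaves[of T] unfolding jb_of_def by simp

lemma ia_mono: "i \<le> j \<Longrightarrow> ia_of T i \<le> ia_of T j"
  unfolding ia_of_def by (rule bidx_mono)

lemma jb_mono: "i \<le> j \<Longrightarrow> jb_of T i \<le> jb_of T j"
  unfolding jb_of_def by (rule bidx_mono)

lemma distinct_Q: "distinct (leaves T) \<Longrightarrow> Q \<in> set (Qs T) \<Longrightarrow> distinct (leaves Q)"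
  using Qs_leaves[of T] by (metis distinct_concat_iff imageI list.set_map)

lemma distinct_R: "distinct (leaves T) \<Longrightarrow> R \<in> set (Rs T) \<Longrightarrow> distinct (leaves R)"
  using Rs_leaves[of T] by (metis distinct_concat_iff imageI list.set_map)

lemma len_filter_card: "distinct xs \<Longrightarrow> length (filter P xs) = card {x \<in> set xs. P x}"
  by (metis distinct_card distinct_filter set_filter)

lemma one_per_Q:
  assumes d: "distinct (leaves T)" and U: "U \<subseteq> {..<length (leaves T)}" and inj: "inj_on (ia_of T) U"
    and C: "C \<subseteq> (\<lambda>i. leaves T ! i) ` U"
  shows "\<forall>Q\<in>set (Qs T). length (filter (\<lambda>x. x \<in> C) (leaves Q)) \<le> 1"
proof
  fix Q assume Q: "Q \<in> set (Qs T)"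
  then obtain a where a: "a < length (Qs T)" "Q = Qs T ! a" by (metis in_set_conv_nth)
  have "length (filter (\<lambda>x. x \<in> C) (leaves Q)) = card {x \<in> set (leaves Q). x \<in> C}"
    using len_filter_card distinct_Q[OF d Q] by blast
  also have "\<dots> \<le> Suc 0"
  proof (subst card_le_Suc0_iff_eq, simp, intro ballI)
    fix x y assume x: "x \<in> {x \<in> set (leaves Q). x \<in> C}" and y: "y \<in> {x \<in> set (leaves Q). x \<in> C}"
    obtain i where i: "i \<in> U" "x = leaves T ! i" using x C by auto
    obtain j where j: "j \<in> U" "y = leaves T ! j" using y C by auto
    have "ia_of T i = a" using ia_eq[OF d _ a(1)] i x a U by auto
    moreover have "ia_of T j = a" using ia_eq[OF d _ a(1)] j y a U by auto
    ultimately have "i = j" using inj i j inj_onD by metis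
    then show "x = y" using i j by simp
  qed
  finally show "length (filter (\<lambda>x. x \<in> C) (leaves Q)) \<le> 1" by simp
qed

lemma one_per_R:
  assumes d: "distinct (leaves T)" and U: "U \<subseteq> {..<length (leaves T)}" and inj: "inj_on (jb_of T) U"
    and C: "C \<subseteq> (\<lambda>i. leaves T ! i) ` U"
  shows "\<forall>R\<in>set (Rs T). length (filter (\<lambda>x. x \<in> C) (leaves R)) \<le> 1"
proof
  fix Q assume Q: "Q \<in> set (Rs T)"
  then obtain a where a: "a < length (Rs T)" "Q = Rs T ! a" by (metis in_set_conv_nth)
  have "length (filter (\<lambda>x. x \<in> C) (leaves Q)) = card {x \<in> set (leaves Q). x \<in> C}"
    using len_filter_card distinct_R[OF d Q] by blast
  also have "\<dots> \<le> Suc 0"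
  proof (subst card_le_Suc0_iff_eq, simp, intro ballI)
    fix x y assume x: "x \<in> {x \<in> set (leaves Q). x \<in> C}" and y: "y \<in> {x \<in> set (leaves Q). x \<in> C}"
    obtain i where i: "i \<in> U" "x = leaves T ! i" using x C by auto
    obtain j where j: "j \<in> U" "y = leaves T ! j" using y C by auto
    have "jb_of T i = a" using jb_eq[OF d _ a(1)] i x a U by auto
    moreover have "jb_of T j = a" using jb_eq[OF d _ a(1)] j y a U by auto
    ultimately have "i = j" using inj i j inj_onD by metis
    then show "x = y" using i j by simp
  qed
  finally show "length (filter (\<lambda>x. x \<in> C) (leaves Q)) \<le> 1" by simp
qed

lemma comb_pick:
  assumes d: "distinct (leaves R)" and U: "U \<subseteq> set (leaves R)" "U \<noteq> {}" and K: "Kr \<le> real (card U)" "Kr > 0"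
  shows "\<exists>C s. C \<subseteq> U \<and> restr C R = Some s \<and> (lcs s \<or> rcs s) \<and> log 2 Kr / 2 + 1 \<le> real (card C)"
proof -
  have UR: "U \<inter> set (leaves R) = U" using U by blast
  obtain A B sa sb where h: "A \<subseteq> U" "B \<subseteq> U" "restr A R = Some sa" "lcs sa" "restr B R = Some sb" "rcs sb"
    "log 2 (real (card U)) + 2 \<le> real (card A) + real (card B)"
    using comb_exists[OF d, of U] UR U(2) by auto
  have "log 2 Kr \<le> log 2 (real (card U))" using K by (subst log_le_cancel_iff) auto
  then have s: "log 2 Kr + 2 \<le> real (card A) + real (card B)" using h(7) by linarith
  show ?thesis
  proof (cases "log 2 Kr / 2 + 1 \<le> real (card A)")
    case True then show ?thesis using h by blast
  next
    case False
    then have "log 2 Kr / 2 + 1 \<le> real (card B)" using s by linarith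
    then show ?thesis using h by blast
  qed
qed

lemma inj_nth_lt: "distinct zs \<Longrightarrow> inj_on (\<lambda>i. zs ! i) {..<length zs}"
  by (simp add: inj_on_def nth_eq_iff_index_eq)

theorem lemma4:
  shows "\<exists>n0::nat. \<forall>n \<ge> n0. \<forall>(Z::nat set) T1 T2.
    finite Z \<and> real (card Z) \<ge> real n powr (1/4) \<and>
    ztree Z T1 \<and> ztree Z T2 \<and> leaves T1 = leaves T2 \<and>
    (\<forall>Q \<in> set (Qs T1). real (length (leaves Q)) \<le> real (card Z) / 20) \<and>
    (\<forall>R \<in> set (Rs T2). real (length (leaves R)) \<le> real (card Z) / 20)
    \<longrightarrow>
    (\<exists>X Y. X \<subseteq> Z \<and> Y \<subseteq> Z \<and> X \<inter> Y = {} \<and>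
        real (card X) \<ge> real n powr (1/16) \<and>
        real (card Y) \<ge> real (card Z) / (10 * log 2 (real n)) \<and>
        incomparable (lca T1 X) (lca T1 Y) \<and> incomparable (lca T2 X) (lca T2 Y))
    \<or>
    (\<exists>A S1 S2. A \<subseteq> Z \<and> real (card A) \<ge> log 2 (real n) / 48 \<and>
        restr A T1 = Some S1 \<and> restr A T2 = Some S2 \<and>
        caterpillar_unrooted S1 \<and> caterpillar_unrooted S2 \<and> identical_unrooted S1 S2)"
proof (rule exI[of _ 2], intro allI impI)
  fix n :: nat and Z :: "nat set" and T1 T2 :: "nat tree"
  assume n2: "n \<ge> 2"
  assume H: "finite Z \<and> real (card Z) \<ge> real n powr (1/4) \<and>
    ztree Z T1 \<and> ztree Z T2 \<and> leaves T1 = leaves T2 \<and>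
    (\<forall>Q \<in> set (Qs T1). real (length (leaves Q)) \<le> real (card Z) / 20) \<and>
    (\<forall>R \<in> set (Rs T2). real (length (leaves R)) \<le> real (card Z) / 20)"
  have szZ: "real (card Z) \<ge> real n powr (1/4)" and zt1: "ztree Z T1" and zt2: "ztree Z T2"
    and eqL: "leaves T1 = leaves T2"
    and hQ: "\<forall>Q \<in> set (Qs T1). real (length (leaves Q)) \<le> real (card Z) / 20"
    and hR: "\<forall>R \<in> set (Rs T2). real (length (leaves R)) \<le> real (card Z) / 20" using H by auto
  define zs where "zs = leaves T1"
  have dz: "distinct zs" and setZ: "set zs = Z" using zt1 unfolding ztree_def zs_def by auto
  have z2: "leaves T2 = zs" using eqL zs_def by simp
  have d1: "distinct (leaves T1)" and d2: "distinct (leaves T2)" using dz z2 zs_def by auto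
  define N where "N = length zs"
  have cZ: "card Z = N" using distinct_card[OF dz] setZ N_def by simp
  define ia where "ia = ia_of T1"
  define jb where "jb = jb_of T2"
  define lg where "lg = log 2 (real n)"
  define \<alpha> where "\<alpha> = real n powr (1/16)"
  define K where "K = real n powr (1/24)"
  define M where "M = real N / (10 * lg)"
  define L where "L = lg / 48"
  have n1: "real n \<ge> 1" using n2 by simp
  have lg1: "lg \<ge> 1" unfolding lg_def using n2 by (subst le_log_iff) auto
  have al0: "\<alpha> > 0" unfolding \<alpha>_def using n2 by simp
  have K1: "K \<ge> 1" unfolding K_def using ge_one_powr_ge_zero[of "real n" "1/24"] n1 by linarith
  have "real n powr (1/4) > 0" using n2 by simp
  then have N0: "real N > 0" using szZ cZ by linarith
  have M0: "M > 0" unfolding M_def using N0 lg1 by simp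
  have L0: "L > 0" unfolding L_def using lg1 by simp
  have MLe: "2 * M * L = real N / 240" unfolding M_def L_def using lg1 by (simp add: field_simps)
  have num: "4 * (K * \<alpha>) * L \<le> (3/4) * real N"
  proof -
    have "4 * (K * \<alpha>) * L \<le> (3/4) * real n powr (1/4)"
      using num_main[OF n1] unfolding K_def \<alpha>_def L_def lg_def by simp
    also have "\<dots> \<le> (3/4) * real N" using szZ cZ by simp
    finally show ?thesis .
  qed
  have ineq: "\<not> real N \<le> 4 * (K * \<alpha>) * L + real N / 5 + 2 * M * L" using num MLe N0 by linarith
  have lenT: "length (leaves T1) = N" "length (leaves T2) = N" using N_def zs_def z2 by auto
  have injz: "inj_on (\<lambda>i. zs ! i) {..<N}" using inj_nth_lt[OF dz] N_def by simp
  have mi: "\<forall>i j. i \<le> j \<longrightarrow> j < N \<longrightarrow> ia i \<le> ia j" unfolding ia_def using ia_mono by blast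
  have mj: "\<forall>i j. i \<le> j \<longrightarrow> j < N \<longrightarrow> jb i \<le> jb j" unfolding jb_def using jb_mono by blast
  have iain: "\<And>i. i < N \<Longrightarrow> ia i < length (Qs T1) \<and> zs ! i \<in> set (leaves (Qs T1 ! ia i))"
    using ia_in lenT zs_def unfolding ia_def by metis
  have jbin: "\<And>i. i < N \<Longrightarrow> jb i < length (Rs T2) \<and> zs ! i \<in> set (leaves (Rs T2 ! jb i))"
    using jb_in lenT z2 unfolding jb_def by metis
  have fibimg: "\<And>F. F \<subseteq> {..<N} \<Longrightarrow> card ((\<lambda>i. zs ! i) ` F) = card F"
    using injz by (meson card_image inj_on_subset)
  have imgZ: "\<And>F. F \<subseteq> {..<N} \<Longrightarrow> (\<lambda>i. zs ! i) ` F \<subseteq> Z"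
    using setZ N_def by auto
  have fibsub: "\<And>f a. fib N f a \<subseteq> {..<N}" by (auto simp: fib_def)
  have szI: "\<forall>a. real (card (fib N ia a)) \<le> real N / 20"
  proof
    fix a
    show "real (card (fib N ia a)) \<le> real N / 20"
    proof (cases "a < length (Qs T1)")
      case True
      have "(\<lambda>i. zs ! i) ` fib N ia a \<subseteq> set (leaves (Qs T1 ! a))" using iain by (auto simp: fib_def)
      then have "card ((\<lambda>i. zs ! i) ` fib N ia a) \<le> card (set (leaves (Qs T1 ! a)))" by (simp add: card_mono)
      also have "\<dots> \<le> length (leaves (Qs T1 ! a))" by (rule card_length)
      finally have "card (fib N ia a) \<le> length (leaves (Qs T1 ! a))" using fibimg[OF fibsub] by simp
      moreover have "real (length (leaves (Qs T1 ! a))) \<le> real N / 20" using hQ True cZ nth_mem by metis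
      ultimately show ?thesis by linarith
    next
      case False
      then have "fib N ia a = {}" using iain by (auto simp: fib_def)
      then show ?thesis using N0 by simp
    qed
  qed
  have szJ: "\<forall>c. real (card (fib N jb c)) \<le> real N / 20"
  proof
    fix c
    show "real (card (fib N jb c)) \<le> real N / 20"
    proof (cases "c < length (Rs T2)")
      case True
      have "(\<lambda>i. zs ! i) ` fib N jb c \<subseteq> set (leaves (Rs T2 ! c))" using jbin by (auto simp: fib_def)
      then have "card ((\<lambda>i. zs ! i) ` fib N jb c) \<le> card (set (leaves (Rs T2 ! c)))" by (simp add: card_mono)
      also have "\<dots> \<le> length (leaves (Rs T2 ! c))" by (rule card_length)
      finally have "card (fib N jb c) \<le> length (leaves (Rs T2 ! c))" using fibimg[OF fibsub] by simp
      moreover have "real (length (leaves (Rs T2 ! c))) \<le> real N / 20" using hR True cZ nth_mem by metis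
      ultimately show ?thesis by linarith
    next
      case False
      then have "fib N jb c = {}" using jbin by (auto simp: fib_def)
      then show ?thesis using N0 by simp
    qed
  qed
  have cases: "(\<exists>c a. (\<forall>p<N. \<forall>q<N. jb p = c \<longrightarrow> ia q = a \<longrightarrow> p < q) \<and>
       ((\<alpha> \<le> real (card (fib N jb c)) \<and> M \<le> real (card (fib N ia a))) \<or>
          (M \<le> real (card (fib N jb c)) \<and> \<alpha> \<le> real (card (fib N ia a))))) \<or>
     (\<exists>A \<subseteq> {..<N}. inj_on ia A \<and> inj_on jb A \<and> L \<le> real (card A)) \<or>
     (\<exists>c. K \<le> real (card (ia ` fib N jb c))) \<or> (\<exists>a. K \<le> real (card (jb ` fib N ia a)))"
  proof (rule ccontr)
    assume neg: "\<not> ?thesis"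
    have noA: "\<forall>c a. (\<forall>p<N. \<forall>q<N. jb p = c \<longrightarrow> ia q = a \<longrightarrow> p < q) \<longrightarrow>
       \<not> ((\<alpha> \<le> real (card (fib N jb c)) \<and> M \<le> real (card (fib N ia a))) \<or>
          (M \<le> real (card (fib N jb c)) \<and> \<alpha> \<le> real (card (fib N ia a))))" using neg by blast
    have noB: "\<forall>A \<subseteq> {..<N}. inj_on ia A \<longrightarrow> inj_on jb A \<longrightarrow> real (card A) < L"
      using neg by (meson not_le)
    have noC1: "\<forall>c. real (card (ia ` fib N jb c)) < K" using neg by (meson not_le)
    have noC2: "\<forall>a. real (card (jb ` fib N ia a)) < K" using neg by (meson not_le)
    have "real N \<le> 4 * (K * \<alpha>) * L + real N / 5 + 2 * M * L"
      by (rule CL[OF mi mj szI szJ al0 M0 K1 noA noB noC1 noC2])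
    then show False using ineq by simp
  qed
  from cases show "(\<exists>X Y. X \<subseteq> Z \<and> Y \<subseteq> Z \<and> X \<inter> Y = {} \<and>
        real (card X) \<ge> real n powr (1/16) \<and>
        real (card Y) \<ge> real (card Z) / (10 * log 2 (real n)) \<and>
        incomparable (lca T1 X) (lca T1 Y) \<and> incomparable (lca T2 X) (lca T2 Y))
    \<or>
    (\<exists>A S1 S2. A \<subseteq> Z \<and> real (card A) \<ge> log 2 (real n) / 48 \<and>
        restr A T1 = Some S1 \<and> restr A T2 = Some S2 \<and>
        caterpillar_unrooted S1 \<and> caterpillar_unrooted S2 \<and> identical_unrooted S1 S2)"
  proof (elim disjE)
    assume "\<exists>c a. (\<forall>p<N. \<forall>q<N. jb p = c \<longrightarrow> ia q = a \<longrightarrow> p < q) \<and>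
       ((\<alpha> \<le> real (card (fib N jb c)) \<and> M \<le> real (card (fib N ia a))) \<or>
          (M \<le> real (card (fib N jb c)) \<and> \<alpha> \<le> real (card (fib N ia a))))"
    then obtain c a where bef: "\<forall>p<N. \<forall>q<N. jb p = c \<longrightarrow> ia q = a \<longrightarrow> p < q"
      and sz: "(\<alpha> \<le> real (card (fib N jb c)) \<and> M \<le> real (card (fib N ia a))) \<or>
          (M \<le> real (card (fib N jb c)) \<and> \<alpha> \<le> real (card (fib N ia a)))" by blast
    define FJ where "FJ = fib N jb c"
    define FI where "FI = fib N ia a"
    define XJ where "XJ = (\<lambda>i. zs ! i) ` FJ"
    define XI where "XI = (\<lambda>i. zs ! i) ` FI"
    have cJ: "card XJ = card FJ" unfolding XJ_def FJ_def using fibimg fibsub by blast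
    have cI: "card XI = card FI" unfolding XI_def FI_def using fibimg fibsub by blast
    have posJ: "0 < real (card FJ)" using sz al0 M0 unfolding FJ_def by linarith
    have posI: "0 < real (card FI)" using sz al0 M0 unfolding FI_def by linarith
    have FJne: "FJ \<noteq> {}" using posJ by auto
    have FIne: "FI \<noteq> {}" using posI by auto
    then obtain q0 where q0: "q0 \<in> FI" by blast
    obtain p0 where p0: "p0 \<in> FJ" using FJne by blast
    have aL: "a < length (Qs T1)" using q0 iain unfolding FI_def fib_def by auto
    have cL: "c < length (Rs T2)" using p0 jbin unfolding FJ_def fib_def by auto
    have XJZ: "XJ \<subseteq> Z" and XIZ: "XI \<subseteq> Z" unfolding XJ_def XI_def FJ_def FI_def using imgZ fibsub by auto
    have disj: "XI \<inter> XJ = {}"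
    proof (rule ccontr)
      assume "XI \<inter> XJ \<noteq> {}"
      then obtain q p where qp: "q \<in> FI" "p \<in> FJ" "zs ! q = zs ! p" unfolding XI_def XJ_def by auto
      then have "q = p" using injz unfolding FI_def FJ_def fib_def by (auto dest: inj_onD)
      then show False using bef qp unfolding FI_def FJ_def fib_def by auto
    qed
    have XI1: "XI \<subseteq> set (leaves (Qs T1 ! a))" using iain unfolding XI_def FI_def fib_def by auto
    have XJ1: "XJ \<subseteq> (\<Union>b<a. set (leaves (Qs T1 ! b)))"
    proof
      fix x assume "x \<in> XJ"
      then obtain p where p: "p \<in> FJ" "x = zs ! p" unfolding XJ_def by auto
      have pN: "p < N" "jb p = c" using p unfolding FJ_def fib_def by auto
      have q0N: "q0 < N" "ia q0 = a" using q0 unfolding FI_def fib_def by auto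
      have "p < q0" using bef pN q0N by blast
      then have "ia p \<le> a" using mi q0N by auto
      moreover have "ia p \<noteq> a" using bef pN by blast
      ultimately have "ia p < a" by simp
      then show "x \<in> (\<Union>b<a. set (leaves (Qs T1 ! b)))" using iain[OF pN(1)] p by auto
    qed
    have XJ2: "XJ \<subseteq> set (leaves (Rs T2 ! c))" using jbin unfolding XJ_def FJ_def fib_def by auto
    have XI2: "XI \<subseteq> (\<Union>d\<in>{c<..<length (Rs T2)}. set (leaves (Rs T2 ! d)))"
    proof
      fix x assume "x \<in> XI"
      then obtain q where q: "q \<in> FI" "x = zs ! q" unfolding XI_def by auto
      have qN: "q < N" "ia q = a" using q unfolding FI_def fib_def by auto
      have p0N: "p0 < N" "jb p0 = c" using p0 unfolding FJ_def fib_def by auto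
      have "p0 < q" using bef qN p0N by blast
      then have "c \<le> jb q" using mj qN p0N by auto
      moreover have "jb q \<noteq> c" using bef qN by blast
      ultimately have "c < jb q" by simp
      then show "x \<in> (\<Union>d\<in>{c<..<length (Rs T2)}. set (leaves (Rs T2 ! d)))" using jbin[OF qN(1)] q by auto
    qed
    have XIne: "XI \<noteq> {}" and XJne: "XJ \<noteq> {}" unfolding XI_def XJ_def using FIne FJne by auto
    have inc1: "incomparable (lca' T1 XI) (lca' T1 XJ)"
      by (rule Qs_incomp[OF d1 aL XIne XI1 XJne XJ1])
    have inc2: "incomparable (lca' T2 XJ) (lca' T2 XI)"
      by (rule Rs_incomp[OF d2 cL XJne XJ2 XIne XI2])
    have s1: "set (leaves T1) = Z" "set (leaves T2) = Z" using setZ zs_def z2 by auto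
    have l1: "lca T1 XI = lca' T1 XI" "lca T1 XJ = lca' T1 XJ"
      using lca_eq[OF d1 XIne] lca_eq[OF d1 XJne] XIZ XJZ s1 by auto
    have l2: "lca T2 XI = lca' T2 XI" "lca T2 XJ = lca' T2 XJ"
      using lca_eq[OF d2 XIne] lca_eq[OF d2 XJne] XIZ XJZ s1 by auto
    have MZ: "M = real (card Z) / (10 * log 2 (real n))" unfolding M_def lg_def cZ ..
    show ?thesis
    proof (rule disjI1)
      show "\<exists>X Y. X \<subseteq> Z \<and> Y \<subseteq> Z \<and> X \<inter> Y = {} \<and>
        real (card X) \<ge> real n powr (1/16) \<and>
        real (card Y) \<ge> real (card Z) / (10 * log 2 (real n)) \<and>
        incomparable (lca T1 X) (lca T1 Y) \<and> incomparable (lca T2 X) (lca T2 Y)"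
      proof (cases "\<alpha> \<le> real (card (fib N jb c)) \<and> M \<le> real (card (fib N ia a))")
        case True
        show ?thesis
          apply (rule exI[of _ XJ], rule exI[of _ XI])
          using True XJZ XIZ disj cJ cI inc1 inc2 l1 l2 MZ incomparable_sym
          unfolding \<alpha>_def FJ_def FI_def by auto
      next
        case False
        then have T: "M \<le> real (card (fib N jb c)) \<and> \<alpha> \<le> real (card (fib N ia a))" using sz by blast
        show ?thesis
          apply (rule exI[of _ XI], rule exI[of _ XJ])
          using T XJZ XIZ disj cJ cI inc1 inc2 l1 l2 MZ incomparable_sym
          unfolding \<alpha>_def FJ_def FI_def by auto
      qed
    qed
  next
    assume "\<exists>A \<subseteq> {..<N}. inj_on ia A \<and> inj_on jb A \<and> L \<le> real (card A)"
    then obtain A where A: "A \<subseteq> {..<N}" "inj_on ia A" "inj_on jb A" "L \<le> real (card A)" by blast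
    define C where "C = (\<lambda>i. zs ! i) ` A"
    have cC: "card C = card A" unfolding C_def using fibimg A(1) by blast
    have CZ: "C \<subseteq> Z" unfolding C_def using imgZ A(1) by blast
    have Cne: "C \<noteq> {}" using A(4) L0 cC by auto
    have s1: "set (leaves T1) = Z" "set (leaves T2) = Z" using setZ zs_def z2 by auto
    obtain S1 where S1: "restr C T1 = Some S1" using restr_None[of C T1] Cne CZ s1 by (cases "restr C T1") auto
    obtain S2 where S2: "restr C T2 = Some S2" using restr_None[of C T2] Cne CZ s1 by (cases "restr C T2") auto
    have U1: "A \<subseteq> {..<length (leaves T1)}" using A(1) lenT by simp
    have U2: "A \<subseteq> {..<length (leaves T2)}" using A(1) lenT by simp
    have lc: "lcs S1" using restr_Qs_lc[OF one_per_Q[OF d1 U1 _ _] S1] A(2) C_def zs_def ia_def by blast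
    have rc: "rcs S2" using restr_Rs_rc[OF one_per_R[OF d2 U2 _ _] S2] A(3) C_def z2 jb_def by blast
    have lv: "leaves S1 = leaves S2" using restr_leaves[OF S1] restr_leaves[OF S2] eqL by simp
    have fin: "caterpillar_unrooted S1 \<and> caterpillar_unrooted S2 \<and> identical_unrooted S1 S2"
      by (rule finish) (use lc rc lv in blast)+
    show ?thesis
      apply (rule disjI2)
      using CZ A(4) cC S1 S2 fin unfolding L_def lg_def by auto
  next
    assume "\<exists>c. K \<le> real (card (ia ` fib N jb c))"
    then obtain c where c: "K \<le> real (card (ia ` fib N jb c))" by blast
    obtain U where U: "U \<subseteq> fib N jb c" "inj_on ia U" "card U = card (ia ` fib N jb c)"
      using reps[OF fib_finite] by blast
    have UN: "U \<subseteq> {..<N}" using U(1) fibsub by blast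
    define U' where "U' = (\<lambda>i. zs ! i) ` U"
    have cU: "card U' = card U" unfolding U'_def using fibimg UN by blast
    have Une: "U \<noteq> {}" using c K1 U(3) by auto
    then obtain p0 where p0: "p0 \<in> U" by blast
    have cL: "c < length (Rs T2)" using p0 U(1) jbin unfolding fib_def by auto
    define R where "R = Rs T2 ! c"
    have Rin: "R \<in> set (Rs T2)" unfolding R_def using cL by simp
    have dR: "distinct (leaves R)" using distinct_R[OF d2 Rin] .
    have UR: "U' \<subseteq> set (leaves R)" unfolding U'_def R_def using U(1) jbin unfolding fib_def by auto
    have U'ne: "U' \<noteq> {}" unfolding U'_def using Une by auto
    have KU: "K \<le> real (card U')" using c cU U(3) by simp
    obtain C s where Cs: "C \<subseteq> U'" "restr C R = Some s" "lcs s \<or> rcs s" "log 2 K / 2 + 1 \<le> real (card C)"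
      using comb_pick[OF dR UR U'ne KU] K1 by auto
    have lK: "log 2 K / 2 = L" unfolding K_def L_def lg_def using n2 by (simp add: log_powr)
    have CZ: "C \<subseteq> Z" using Cs(1) imgZ UN unfolding U'_def by blast
    have Cne: "C \<noteq> {}" using Cs(4) lK L0 by auto
    have s1: "set (leaves T1) = Z" "set (leaves T2) = Z" using setZ zs_def z2 by auto
    obtain S1 where S1: "restr C T1 = Some S1" using restr_None[of C T1] Cne CZ s1 by (cases "restr C T1") auto
    have S2: "restr C T2 = Some s" using restr_block_R[OF Rin d2] Cs(1,2) UR by auto
    have U1: "U \<subseteq> {..<length (leaves T1)}" using UN lenT by simp
    have lc: "lcs S1" using restr_Qs_lc[OF one_per_Q[OF d1 U1 _ _] S1] U(2) Cs(1) U'_def zs_def ia_def by blast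
    have lv: "leaves S1 = leaves s" using restr_leaves[OF S1] restr_leaves[OF S2] eqL by simp
    have fin: "caterpillar_unrooted S1 \<and> caterpillar_unrooted s \<and> identical_unrooted S1 s"
      by (rule finish) (use lc Cs(3) lv in blast)+
    show ?thesis
      apply (rule disjI2)
      using CZ Cs(4) lK S1 S2 fin unfolding L_def lg_def by auto
  next
    assume "\<exists>a. K \<le> real (card (jb ` fib N ia a))"
    then obtain a where c: "K \<le> real (card (jb ` fib N ia a))" by blast
    obtain U where U: "U \<subseteq> fib N ia a" "inj_on jb U" "card U = card (jb ` fib N ia a)"
      using reps[OF fib_finite] by blast
    have UN: "U \<subseteq> {..<N}" using U(1) fibsub by blast
    define U' where "U' = (\<lambda>i. zs ! i) ` U"
    have cU: "card U' = card U" unfolding U'_def using fibimg UN by blast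
    have Une: "U \<noteq> {}" using c K1 U(3) by auto
    then obtain p0 where p0: "p0 \<in> U" by blast
    have aL: "a < length (Qs T1)" using p0 U(1) iain unfolding fib_def by auto
    define R where "R = Qs T1 ! a"
    have Rin: "R \<in> set (Qs T1)" unfolding R_def using aL by simp
    have dR: "distinct (leaves R)" using distinct_Q[OF d1 Rin] .
    have UR: "U' \<subseteq> set (leaves R)" unfolding U'_def R_def using U(1) iain unfolding fib_def by auto
    have U'ne: "U' \<noteq> {}" unfolding U'_def using Une by auto
    have KU: "K \<le> real (card U')" using c cU U(3) by simp
    obtain C s where Cs: "C \<subseteq> U'" "restr C R = Some s" "lcs s \<or> rcs s" "log 2 K / 2 + 1 \<le> real (card C)"
      using comb_pick[OF dR UR U'ne KU] K1 by auto
    have lK: "log 2 K / 2 = L" unfolding K_def L_def lg_def using n2 by (simp add: log_powr)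
    have CZ: "C \<subseteq> Z" using Cs(1) imgZ UN unfolding U'_def by blast
    have Cne: "C \<noteq> {}" using Cs(4) lK L0 by auto
    have s1: "set (leaves T1) = Z" "set (leaves T2) = Z" using setZ zs_def z2 by auto
    obtain S2 where S2: "restr C T2 = Some S2" using restr_None[of C T2] Cne CZ s1 by (cases "restr C T2") auto
    have S1: "restr C T1 = Some s" using restr_block_Q[OF Rin d1] Cs(1,2) UR by auto
    have U2: "U \<subseteq> {..<length (leaves T2)}" using UN lenT by simp
    have rc: "rcs S2" using restr_Rs_rc[OF one_per_R[OF d2 U2 _ _] S2] U(2) Cs(1) U'_def z2 jb_def by blast
    have lv: "leaves s = leaves S2" using restr_leaves[OF S1] restr_leaves[OF S2] eqL by simp
    have fin: "caterpillar_unrooted s \<and> caterpillar_unrooted S2 \<and> identical_unrooted s S2"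
      by (rule finish) (use rc Cs(3) lv in blast)+
    show ?thesis
      apply (rule disjI2)
      using CZ Cs(4) lK S1 S2 fin unfolding L_def lg_def by auto
  qed
qed

end
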